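(* Let $\ell,\ell'$ be geodesic lines of $\mathbb{H}^2$ and $h\in G_0$ with $\sup_{(x,x')\in\ell\times\ell'}\big(d(x,h\cdot x')-d(x,x')\big)<0$. Suppose $\ell,\ell'$ have disjoint closures in $\overline{\mathbb{H}^2}$ and are transversely oriented away from each other, and $\ell$ and $h\cdot\ell'$ have disjoint closures in $\overline{\mathbb{H}^2}$ and are transversely oriented away from each other (with the transverse orientation of $h\cdot\ell'$ induced by $h$). Let $(P'_+(t))_{t>0}$, $(P'_-(t))_{t>0}$ be the two connected components of $\partial\mathsf{SQ}(\ell')\smallsetminus\{e\}$ and $(P_+(t))_{t>0}$, $(P_-(t))_{t>0}$ those of $\partial\mathsf{SQ}(\ell)\smallsetminus\{e\}$. Then either $h\in\mathsf{SQ}(\ell)$, or exactly one of the open rays $(hP'_+(t))_{t>0}$, $(hP'_-(t))_{t>0}$ intersects $\mathsf{SQ}(\ell)$ transversely (and these cases are mutually exclusive). Similarly, either $h\in\mathsf{SQ}(\ell')^{-1}$, or exactly one of the open rays $(P_+(t)^{-1}h)_{t>0}$, $(P_-(t)^{-1}h)_{t>0}$ intersects $\mathsf{SQ}(\ell')^{-1}$ transversely (and these cases are mutually exclusive).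
   Context: $\mathbb{H}^2$ is the hyperbolic plane with metric $d$, $\overline{\mathbb{H}^2}=\mathbb{H}^2\cup\partial_\infty\mathbb{H}^2$, and $G_0=\mathrm{PSL}_2(\mathbb{R})$ (identified with $\mathrm{AdS}^3$). For a transversely oriented geodesic line $\ell$, the stem quadrant $\mathsf{SQ}(\ell)\subset G_0$ is the set of hyperbolic elements whose translation axis is orthogonal to $\ell$ and which translate towards the positive side of $\ell$; it is an open subset of a timelike totally geodesic plane of $\mathrm{AdS}^3$, and $\partial\mathsf{SQ}(\ell)$ is its boundary in that plane: the identity $e$ together with two lightlike rays $\{P_\pm(t):t>0\}$, where $P_\pm$ are one-parameter subgroups of parabolic elements fixing the two endpoints of $\ell$. $A^{-1}=\{a^{-1}:a\in A\}$. Transverse intersection means a curve meeting the surface transversely in $G_0$. *)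

theory Defs
  imports "HOL-Analysis.Analysis"
begin

text \<open>G_0 = PSL_2(R) is represented by SL_2(R) (real 2x2 matrices of determinant 1);
all subsets of G_0 used below are invariant under g \<mapsto> -g, so membership is well defined on
PSL_2(R). The hyperbolic plane is the hyperboloid model realised in the 3-dimensional Minkowski
space of real symmetric 2x2 matrices with quadratic form det (signature (1,2)); G_0 acts by
congruence X \<mapsto> g X g^T, which is the standard isometric action of PSL_2(R).\<close>

type_synonym mat2 = "real^2^2"

definition SL2 :: "mat2 set" where
  "SL2 = {g. det g = 1}"

definition sym2 :: "mat2 \<Rightarrow> bool" where
  "sym2 X \<longleftrightarrow> transpose X = X"

definition mink :: "mat2 \<Rightarrow> mat2 \<Rightarrow> real" where
  "mink X Y = (det (X + Y) - det X - det Y) / 2"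

definition hyp_plane :: "mat2 set" where
  "hyp_plane = {X. sym2 X \<and> det X = 1 \<and> X $ 1 $ 1 > 0}"

definition hdist :: "mat2 \<Rightarrow> mat2 \<Rightarrow> real" where
  "hdist X Y = arcosh (mink X Y)"

definition act :: "mat2 \<Rightarrow> mat2 \<Rightarrow> mat2" where
  "act g X = g ** X ** transpose g"

text \<open>Ideal points (points of the boundary at infinity) are represented by nonzero future
null vectors, i.e. the rays through them.\<close>
definition ideal_pt :: "mat2 \<Rightarrow> bool" where
  "ideal_pt V \<longleftrightarrow> sym2 V \<and> det V = 0 \<and> V \<noteq> 0 \<and> V $ 1 $ 1 + V $ 2 $ 2 > 0"

text \<open>A transversely oriented geodesic line is given by a unit spacelike normal N:
the line is N^\<bottom> \<inter> H^2 and its positive side is {mink X N > 0}.\<close>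
definition spacelike_unit :: "mat2 \<Rightarrow> bool" where
  "spacelike_unit N \<longleftrightarrow> sym2 N \<and> det N = -1"

definition geod :: "mat2 \<Rightarrow> mat2 set" where
  "geod N = {X \<in> hyp_plane. mink X N = 0}"

definition pos_side :: "mat2 \<Rightarrow> mat2 set" where
  "pos_side N = {X \<in> hyp_plane. mink X N > 0}"

text \<open>Closure of geod N in the compactification = the line together with its two endpoints
(ideal points V with mink V N = 0). Disjoint closures: no common point and no common endpoint.\<close>
definition disjoint_closures :: "mat2 \<Rightarrow> mat2 \<Rightarrow> bool" where
  "disjoint_closures N M \<longleftrightarrow>
     geod N \<inter> geod M = {} \<and> \<not> (\<exists>V. ideal_pt V \<and> mink V N = 0 \<and> mink V M = 0)"

definition oriented_away :: "mat2 \<Rightarrow> mat2 \<Rightarrow> bool" where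
  "oriented_away N M \<longleftrightarrow>
     (\<forall>X\<in>geod M. mink X N < 0) \<and> (\<forall>X\<in>geod N. mink X M < 0)"

definition hyperbolic_el :: "mat2 \<Rightarrow> bool" where
  "hyperbolic_el g \<longleftrightarrow> g \<in> SL2 \<and> \<bar>trace g\<bar> > 2"

definition transl_axis :: "mat2 \<Rightarrow> mat2 set" where
  "transl_axis g = {X \<in> hyp_plane. hdist X (act g X) = (INF Y\<in>hyp_plane. hdist Y (act g Y))}"

text \<open>Geodesic lines meet orthogonally: they share a point p at which their tangent vectors
(in the tangent space p^\<bottom>, with Riemannian metric the restriction of mink) are orthogonal.\<close>
definition orth_geod :: "mat2 \<Rightarrow> mat2 \<Rightarrow> bool" where
  "orth_geod M N \<longleftrightarrow> (\<exists>p \<in> geod M \<inter> geod N. \<forall>u w.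
      sym2 u \<and> mink u p = 0 \<and> mink u M = 0 \<and> sym2 w \<and> mink w p = 0 \<and> mink w N = 0
      \<longrightarrow> mink u w = 0)"

definition SQ :: "mat2 \<Rightarrow> mat2 set" where
  "SQ N = {g \<in> SL2. hyperbolic_el g
      \<and> (\<exists>M. spacelike_unit M \<and> transl_axis g = geod M \<and> orth_geod M N)
      \<and> (\<exists>p \<in> transl_axis g \<inter> geod N. act g p \<in> pos_side N)}"

text \<open>One-parameter subgroup of parabolic (unipotent) elements t \<mapsto> exp(tX) = I + tX,
X nonzero nilpotent.\<close>
definition par_curve :: "mat2 \<Rightarrow> real \<Rightarrow> mat2" where
  "par_curve X t = mat 1 + t *\<^sub>R X"

text \<open>X generates one of the two lightlike boundary rays {P(t) : t > 0} of SQ(N): a parabolic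
one-parameter subgroup fixing an endpoint of geod N whose positive half lies in the boundary
(= closure minus the open quadrant, which contains no parabolic element) of SQ(N).\<close>
definition bdry_ray :: "mat2 \<Rightarrow> mat2 \<Rightarrow> bool" where
  "bdry_ray N X \<longleftrightarrow> X \<noteq> 0 \<and> X ** X = 0
     \<and> (\<exists>V. ideal_pt V \<and> mink V N = 0 \<and> (\<forall>t. \<exists>c>0. act (par_curve X t) V = c *\<^sub>R V))
     \<and> (\<forall>t>0. par_curve X t \<in> closure (SQ N))"

definition ray_set :: "mat2 \<Rightarrow> mat2 set" where
  "ray_set X = {par_curve X t | t. t > 0}"

definition surf_tangent :: "mat2 set \<Rightarrow> mat2 \<Rightarrow> mat2 set" where
  "surf_tangent S p = {v. \<exists>\<gamma> e. 0 < e \<and> \<gamma> 0 = p \<and> (\<forall>s. \<bar>s\<bar> < e \<longrightarrow> \<gamma> s \<in> S)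
      \<and> (\<gamma> has_vector_derivative v) (at 0)}"

definition meets_transv :: "(real \<Rightarrow> mat2) \<Rightarrow> mat2 set \<Rightarrow> bool" where
  "meets_transv c S \<longleftrightarrow> (\<exists>t>0. c t \<in> S) \<and>
     (\<forall>t>0. c t \<in> S \<longrightarrow> c differentiable (at t) \<and> vector_derivative c (at t) \<notin> surf_tangent S (c t))"

definition exactly_one3 :: "bool \<Rightarrow> bool \<Rightarrow> bool \<Rightarrow> bool" where
  "exactly_one3 A B C \<longleftrightarrow> (A \<and> \<not> B \<and> \<not> C) \<or> (\<not> A \<and> B \<and> \<not> C) \<or> (\<not> A \<and> \<not> B \<and> C)"

end

theory Submission
  imports Defs
begin


definition M2 :: "real \<Rightarrow> real \<Rightarrow> real \<Rightarrow> real \<Rightarrow> real^2^2" where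
  "M2 a b c d = (\<chi> i j. if i = 1 then (if j = 1 then a else b) else (if j = 1 then c else d))"

lemma M2_nth [simp]:
  "M2 a b c d $ 1 $ 1 = a" "M2 a b c d $ 1 $ 2 = b" "M2 a b c d $ 2 $ 1 = c" "M2 a b c d $ 2 $ 2 = d"
  by (simp_all add: M2_def)

lemma M2_eta: "g = M2 (g$1$1) (g$1$2) (g$2$1) (g$2$2)"
  by (simp add: vec_eq_iff forall_2)

lemma M2_cases: obtains a b c d where "g = M2 a b c d"
  using M2_eta by blast

lemma M2_eq_iff [simp]: "M2 a b c d = M2 a' b' c' d' \<longleftrightarrow> a = a' \<and> b = b' \<and> c = c' \<and> d = d'"
  by (metis M2_nth)

lemma M2_mult [simp]: "M2 a b c d ** M2 a' b' c' d' =
   M2 (a*a'+b*c') (a*b'+b*d') (c*a'+d*c') (c*b'+d*d')"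
  by (simp add: matrix_matrix_mult_def vec_eq_iff forall_2 sum_2)

lemma M2_transpose [simp]: "transpose (M2 a b c d) = M2 a c b d"
  by (simp add: transpose_def vec_eq_iff forall_2)

lemma M2_add [simp]: "M2 a b c d + M2 a' b' c' d' = M2 (a+a') (b+b') (c+c') (d+d')"
  by (simp add: vec_eq_iff forall_2)

lemma M2_diff [simp]: "M2 a b c d - M2 a' b' c' d' = M2 (a-a') (b-b') (c-c') (d-d')"
  by (simp add: vec_eq_iff forall_2)

lemma M2_scaleR [simp]: "r *\<^sub>R M2 a b c d = M2 (r*a) (r*b) (r*c) (r*d)"
  by (simp add: vec_eq_iff forall_2)

lemma M2_uminus [simp]: "- M2 a b c d = M2 (-a) (-b) (-c) (-d)"
  by (simp add: vec_eq_iff forall_2)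

lemma M2_det [simp]: "det (M2 a b c d) = a*d - b*c"
  by (simp add: det_2)

lemma M2_mat1: "mat 1 = M2 1 0 0 1"
  by (simp add: vec_eq_iff forall_2 mat_def)

lemma M2_zero: "0 = M2 0 0 0 0"
  by (simp add: vec_eq_iff forall_2)

lemma M2_trace [simp]: "trace (M2 a b c d) = a + d"
  by (simp add: trace_def sum_2)

lemma mink_M2 [simp]: "mink (M2 a b c d) (M2 a' b' c' d') = (a*d' + d*a' - b*c' - c*b')/2"
  by (simp add: mink_def algebra_simps)

lemma sym2_M2 [simp]: "sym2 (M2 a b c d) \<longleftrightarrow> b = c"
  by (auto simp: sym2_def)

lemma act_M2 [simp]: "act (M2 a b c d) (M2 x y z w) = M2 a b c d ** M2 x y z w ** M2 a c b d"
  by (simp add: act_def)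

definition adj2 :: "real^2^2 \<Rightarrow> real^2^2" where
  "adj2 g = M2 (g$2$2) (-g$1$2) (-g$2$1) (g$1$1)"

lemma adj2_M2 [simp]: "adj2 (M2 a b c d) = M2 d (-b) (-c) a"
  by (simp add: adj2_def)

lemma adj2_mult: "adj2 (g ** h) = adj2 h ** adj2 g"
  by (cases g rule: M2_cases, cases h rule: M2_cases) (simp add: algebra_simps)

lemma adj2_adj2 [simp]: "adj2 (adj2 g) = g"
  by (cases g rule: M2_cases) simp

lemma det_adj2 [simp]: "det (adj2 g) = det g"
  by (cases g rule: M2_cases) (simp add: algebra_simps)

lemma mult_adj2: "det g = 1 \<Longrightarrow> g ** adj2 g = mat 1"
  by (cases g rule: M2_cases) (simp add: M2_mat1 algebra_simps)

lemma adj2_mult': "det g = 1 \<Longrightarrow> adj2 g ** g = mat 1"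
  by (cases g rule: M2_cases) (simp add: M2_mat1 algebra_simps)

lemma adj2_add: "adj2 (a + b) = adj2 a + adj2 b"
  by (cases a rule: M2_cases, cases b rule: M2_cases) simp

lemma adj2_scaleR: "adj2 (r *\<^sub>R a) = r *\<^sub>R adj2 a"
  by (cases a rule: M2_cases) simp

lemma adj2_mat1 [simp]: "adj2 (mat 1) = mat 1"
  by (simp add: M2_mat1)

lemma linear_adj2: "linear adj2"
  by (rule linearI) (simp_all add: adj2_add adj2_scaleR)

lemma matrix_inv_SL2: assumes "det g = 1" shows "matrix_inv g = adj2 g"
proof -
  have ex: "\<exists>A'. g ** A' = mat 1 \<and> A' ** g = mat 1"
    using mult_adj2[OF assms] adj2_mult'[OF assms] by blast
  define B where "B = matrix_inv g"
  have B: "g ** B = mat 1 \<and> B ** g = mat 1"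
    unfolding B_def matrix_inv_def using someI_ex[OF ex] by simp
  have "B = B ** (g ** adj2 g)" using mult_adj2[OF assms] by simp
  also have "\<dots> = (B ** g) ** adj2 g" by (simp add: matrix_mul_assoc)
  also have "\<dots> = adj2 g" using B by simp
  finally show ?thesis unfolding B_def .
qed

lemma act_act: "act k (act g X) = act (k ** g) X"
  by (simp add: act_def matrix_mul_assoc matrix_transpose_mul)

lemma act_mat1 [simp]: "act (mat 1) X = X"
  by (simp add: act_def)

lemma act_adj2_act: "det k = 1 \<Longrightarrow> act (adj2 k) (act k X) = X"
  by (simp add: act_act adj2_mult')

lemma act_act_adj2: "det k = 1 \<Longrightarrow> act k (act (adj2 k) X) = X"
  by (simp add: act_act mult_adj2)

lemma det_act: "det (act k X) = (det k)^2 * det X"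
  by (simp add: act_def det_mul det_transpose power2_eq_square)

lemma act_add: "act k (X + Y) = act k X + act k Y"
  by (cases k rule: M2_cases, cases X rule: M2_cases, cases Y rule: M2_cases) (simp add: algebra_simps)

lemma act_scaleR: "act k (r *\<^sub>R X) = r *\<^sub>R act k X"
  by (cases k rule: M2_cases, cases X rule: M2_cases) (simp add: algebra_simps)

lemma mink_act: "det k = 1 \<Longrightarrow> mink (act k X) (act k Y) = mink X Y"
  by (simp add: mink_def act_add[symmetric] det_act)

lemma sym2_act: "sym2 X \<Longrightarrow> sym2 (act k X)"
  by (simp add: sym2_def act_def matrix_transpose_mul matrix_mul_assoc)

lemma hyp_plane_M2: "M2 a b c d \<in> hyp_plane \<longleftrightarrow> b = c \<and> a*d - b*c = 1 \<and> a > 0"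
  by (simp add: hyp_plane_def)

lemma hyp_act: assumes "X \<in> hyp_plane" "det k = 1" shows "act k X \<in> hyp_plane"
proof -
  obtain a b c d where X: "X = M2 a b c d" by (rule M2_cases)
  obtain p q r t where k: "k = M2 p q r t" by (rule M2_cases)
  have h: "b = c" "a*d - b*c = 1" "a > 0" "p*t - q*r = 1" using assms X k by (auto simp: hyp_plane_M2)
  have e0: "a * (p*(p*a + q*c) + q*(p*b + q*d)) - ((p*a + q*b)^2 + q^2) = q^2*(a*d - b*c - 1)"
    using h(1) by (simp add: power2_eq_square algebra_simps)
  have e: "a * (p*(p*a + q*c) + q*(p*b + q*d)) = (p*a + q*b)^2 + q^2"
    using e0 h(2) by simp
  have "(p*a + q*b)^2 + q^2 > 0"
  proof (cases "q = 0")
    case True then have "p \<noteq> 0" using h by auto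
    then show ?thesis using True h by simp
  qed (intro add_nonneg_pos; simp)
  then have "p*(p*a + q*c) + q*(p*b + q*d) > 0" using e h(3)
    by (metis zero_less_mult_pos)
  then show ?thesis using X k h sym2_act[of X k] det_act[of k X]
    by (simp add: hyp_plane_def algebra_simps)
qed


definition conj2 :: "real^2^2 \<Rightarrow> real^2^2 \<Rightarrow> real^2^2" where
  "conj2 k g = k ** g ** adj2 k"

lemma hdist_act: "det k = 1 \<Longrightarrow> hdist (act k X) (act k Y) = hdist X Y"
  by (simp add: hdist_def mink_act)

lemma act_image_iff: "det k = 1 \<Longrightarrow> Z \<in> act k ` A \<longleftrightarrow> act (adj2 k) Z \<in> A"
  by (metis act_act_adj2 act_adj2_act image_iff)

lemma hyp_act_iff: "det k = 1 \<Longrightarrow> act k X \<in> hyp_plane \<longleftrightarrow> X \<in> hyp_plane"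
  by (metis act_adj2_act det_adj2 hyp_act)

lemma hyp_image: assumes "det k = 1" shows "act k ` hyp_plane = hyp_plane"
proof -
  have "Z \<in> act k ` hyp_plane \<longleftrightarrow> Z \<in> hyp_plane" for Z
    using act_image_iff[OF assms, of Z hyp_plane] hyp_act_iff[of "adj2 k" Z] assms by simp
  then show ?thesis by blast
qed

lemma geod_act: assumes "det k = 1" shows "geod (act k M) = act k ` geod M"
proof -
  have "Z \<in> geod (act k M) \<longleftrightarrow> act (adj2 k) Z \<in> geod M" for Z
  proof -
    have "Z \<in> hyp_plane \<longleftrightarrow> act (adj2 k) Z \<in> hyp_plane" using hyp_act_iff[of "adj2 k" Z] assms by simp
    moreover have "mink Z (act k M) = mink (act (adj2 k) Z) M"
      using assms mink_act[of "adj2 k" Z "act k M"] by (simp add: act_adj2_act)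
    ultimately show ?thesis by (simp add: geod_def)
  qed
  then show ?thesis using act_image_iff[OF assms] by blast
qed

lemma pos_side_act: assumes "det k = 1" shows "pos_side (act k M) = act k ` pos_side M"
proof -
  have "Z \<in> pos_side (act k M) \<longleftrightarrow> act (adj2 k) Z \<in> pos_side M" for Z
  proof -
    have "Z \<in> hyp_plane \<longleftrightarrow> act (adj2 k) Z \<in> hyp_plane" using hyp_act_iff[of "adj2 k" Z] assms by simp
    moreover have "mink Z (act k M) = mink (act (adj2 k) Z) M"
      using assms mink_act[of "adj2 k" Z "act k M"] by (simp add: act_adj2_act)
    ultimately show ?thesis by (simp add: pos_side_def)
  qed
  then show ?thesis using act_image_iff[OF assms] by blast
qed

lemma act_conj2: "det k = 1 \<Longrightarrow> act (conj2 k g) (act k X) = act k (act g X)"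
  by (simp add: conj2_def act_act matrix_mul_assoc[symmetric] adj2_mult')

lemma det_conj2: "det k = 1 \<Longrightarrow> det (conj2 k g) = det g"
  by (simp add: conj2_def det_mul)

lemma trace_conj2: "det k = 1 \<Longrightarrow> trace (conj2 k g) = trace g"
proof -
  assume k: "det k = 1"
  have "trace (conj2 k g) = trace (adj2 k ** (k ** g))"
    unfolding conj2_def by (rule trace_mul_sym)
  also have "\<dots> = trace g" by (simp add: matrix_mul_assoc adj2_mult'[OF k])
  finally show ?thesis .
qed

lemma conj2_conj2: "det k = 1 \<Longrightarrow> conj2 (adj2 k) (conj2 k g) = g"
  by (simp add: conj2_def matrix_mul_assoc adj2_mult' adj2_mult)
     (simp add: matrix_mul_assoc[symmetric] adj2_mult')

lemma transl_axis_conj: assumes k: "det k = 1"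
  shows "transl_axis (conj2 k g) = act k ` transl_axis g"
proof -
  have eqD: "hdist (act k Y) (act (conj2 k g) (act k Y)) = hdist Y (act g Y)" for Y
    using k by (simp add: act_conj2 hdist_act)
  have "(\<lambda>Y. hdist Y (act (conj2 k g) Y)) ` hyp_plane
      = (\<lambda>Y. hdist Y (act (conj2 k g) Y)) ` (act k ` hyp_plane)"
    using hyp_image[OF k] by simp
  also have "\<dots> = (\<lambda>Y. hdist Y (act g Y)) ` hyp_plane"
    by (simp add: image_image eqD)
  finally have I: "(INF Y\<in>hyp_plane. hdist Y (act (conj2 k g) Y)) = (INF Y\<in>hyp_plane. hdist Y (act g Y))"
    by simp
  have "Z \<in> transl_axis (conj2 k g) \<longleftrightarrow> act (adj2 k) Z \<in> transl_axis g" for Z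
  proof -
    have Z: "Z = act k (act (adj2 k) Z)" using k by (simp add: act_act_adj2)
    have "hdist Z (act (conj2 k g) Z) = hdist (act (adj2 k) Z) (act g (act (adj2 k) Z))"
      by (subst (1 2) Z, rule eqD)
    moreover have "Z \<in> hyp_plane \<longleftrightarrow> act (adj2 k) Z \<in> hyp_plane" using hyp_act_iff[of "adj2 k" Z] k by simp
    ultimately show ?thesis
      unfolding transl_axis_def by (simp add: I)
  qed
  then show ?thesis using act_image_iff[OF k] by blast
qed

lemma orth_geod_act: assumes k: "det k = 1" and o: "orth_geod M N"
  shows "orth_geod (act k M) (act k N)"
proof -
  obtain p where p: "p \<in> geod M \<inter> geod N" and P: "\<forall>u w.
      sym2 u \<and> mink u p = 0 \<and> mink u M = 0 \<and> sym2 w \<and> mink w p = 0 \<and> mink w N = 0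
      \<longrightarrow> mink u w = 0" using o unfolding orth_geod_def by blast
  have "act k p \<in> geod (act k M) \<inter> geod (act k N)" using p k by (simp add: geod_act)
  moreover have "mink u w = 0" if "sym2 u" "mink u (act k p) = 0" "mink u (act k M) = 0"
    "sym2 w" "mink w (act k p) = 0" "mink w (act k N) = 0" for u w
  proof -
    have dk: "det (adj2 k) = 1" using k by simp
    have e1: "mink (act (adj2 k) u) p = 0"
      using mink_act[OF dk, of u "act k p"] that(2) act_adj2_act[OF k] by simp
    have e2: "mink (act (adj2 k) u) M = 0"
      using mink_act[OF dk, of u "act k M"] that(3) act_adj2_act[OF k] by simp
    have e3: "mink (act (adj2 k) w) p = 0"
      using mink_act[OF dk, of w "act k p"] that(5) act_adj2_act[OF k] by simp
    have e4: "mink (act (adj2 k) w) N = 0"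
      using mink_act[OF dk, of w "act k N"] that(6) act_adj2_act[OF k] by simp
    have "mink (act (adj2 k) u) (act (adj2 k) w) = 0"
      using P sym2_act[OF that(1), of "adj2 k"] sym2_act[OF that(4), of "adj2 k"] e1 e2 e3 e4
      by blast
    then show ?thesis using k mink_act[of "adj2 k" u w] by simp
  qed
  ultimately show ?thesis unfolding orth_geod_def by blast
qed

lemma spacelike_unit_act: "det k = 1 \<Longrightarrow> spacelike_unit N \<Longrightarrow> spacelike_unit (act k N)"
  by (simp add: spacelike_unit_def sym2_act det_act)

lemma SQ_conj: assumes k: "det k = 1" and g: "g \<in> SQ N"
  shows "conj2 k g \<in> SQ (act k N)"
proof -
  from g obtain M where gS: "g \<in> SL2" "hyperbolic_el g" and M: "spacelike_unit M"
    "transl_axis g = geod M" "orth_geod M N"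
    and p: "\<exists>p \<in> transl_axis g \<inter> geod N. act g p \<in> pos_side N"
    unfolding SQ_def by blast
  from p obtain p where p1: "p \<in> transl_axis g" "p \<in> geod N" "act g p \<in> pos_side N" by blast
  have "conj2 k g \<in> SL2" using gS k by (simp add: SL2_def det_conj2)
  moreover have "hyperbolic_el (conj2 k g)" using gS k
    by (simp add: hyperbolic_el_def SL2_def det_conj2 trace_conj2)
  moreover have "spacelike_unit (act k M) \<and> transl_axis (conj2 k g) = geod (act k M)
      \<and> orth_geod (act k M) (act k N)"
    using M k by (simp add: spacelike_unit_act transl_axis_conj geod_act orth_geod_act)
  moreover have "act k p \<in> transl_axis (conj2 k g) \<inter> geod (act k N)
     \<and> act (conj2 k g) (act k p) \<in> pos_side (act k N)"
    using p1 k by (simp add: transl_axis_conj geod_act pos_side_act act_conj2)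
  ultimately show ?thesis unfolding SQ_def by blast
qed

lemma SQ_conj_iff: assumes k: "det k = 1"
  shows "conj2 k g \<in> SQ (act k N) \<longleftrightarrow> g \<in> SQ N"
proof
  assume "conj2 k g \<in> SQ (act k N)"
  from SQ_conj[OF _ this, of "adj2 k"] k show "g \<in> SQ N"
    by (simp add: conj2_conj2 act_adj2_act)
qed (rule SQ_conj[OF k])


definition N0 :: "real^2^2" where "N0 = M2 0 (-1) (-1) 0"

definition axisA :: "real^2^2 \<Rightarrow> real^2^2" where
  "axisA g = M2 (-(g$1$2)) ((g$1$1 - g$2$2)/2) ((g$1$1 - g$2$2)/2) (g$2$1)"

definition SQ0 :: "(real^2^2) set" where
  "SQ0 = {g. det g = 1 \<and> g$1$1 = g$2$2 \<and> \<bar>g$1$1\<bar> > 1 \<and> g$1$1 * g$1$2 > 0}"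

lemma mink_sym: "mink X Y = mink Y X"
  by (simp add: mink_def add.commute algebra_simps)

lemma mink_lin: "mink (a *\<^sub>R X + b *\<^sub>R Y) Z = a * mink X Z + b * mink Y Z"
  by (cases X rule: M2_cases, cases Y rule: M2_cases, cases Z rule: M2_cases)
     (simp add: field_simps)

lemma mink_scale2: "mink X (c *\<^sub>R Y) = c * mink X Y"
  by (cases X rule: M2_cases, cases Y rule: M2_cases) (simp add: field_simps)

lemma det_lin: "det (a *\<^sub>R X + b *\<^sub>R Y) = a^2 * det X + 2*a*b * mink X Y + b^2 * det Y"
  by (cases X rule: M2_cases, cases Y rule: M2_cases) (simp add: field_simps power2_eq_square)

lemma disp_identity:
  assumes "det g = 1" "sym2 Y"
  shows "mink Y (act g Y) = ((trace g)^2/2 - 1) * det Y + 2 * (mink Y (axisA g))^2"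
proof -
  obtain a b c d where g: "g = M2 a b c d" by (rule M2_cases)
  obtain x y z w where Y: "Y = M2 x y z w" by (rule M2_cases)
  have h: "a*d - b*c = 1" "y = z" using assms g Y by auto
  have "mink Y (act g Y) - (((trace g)^2/2 - (a*d - b*c)) * det Y + 2 * (mink Y (axisA g))^2) = 0"
    using h(2) by (simp add: g Y axisA_def power2_eq_square field_simps)
  then show ?thesis using h(1) by simp
qed

lemma mink_hyp_ge1: assumes "X \<in> hyp_plane" "Y \<in> hyp_plane" shows "mink X Y \<ge> 1"
proof -
  obtain a b c d where X: "X = M2 a b c d" by (rule M2_cases)
  obtain e f g h where Y: "Y = M2 e f g h" by (rule M2_cases)
  have hx: "b = c" "a*d - b*c = 1" "a > 0" using assms(1) X by (auto simp: hyp_plane_M2)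
  have hy: "f = g" "e*h - f*g = 1" "e > 0" using assms(2) Y by (auto simp: hyp_plane_M2)
  have ad: "a*d = 1 + b*b" "e*h = 1+f*f" using hx hy by auto
  have "b*b \<ge> 0" "f*f \<ge> 0" by simp_all
  then have "a*d > 0" "e*h > 0" using ad by linarith+
  then have d0: "d > 0" and h0: "h > 0" using hx(3) hy(3) zero_less_mult_pos by blast+
  have pos: "a*h + d*e > 0" using hx(3) hy(3) d0 h0 by (simp add: add_pos_pos)
  have eq1: "(a*h + d*e)^2 - (2*(1 + b*f))^2 = (a*h - d*e)^2 + 4*((a*d)*(e*h) - (1+b*f)^2)"
    by (simp add: power2_eq_square algebra_simps)
  have eq2: "(a*d)*(e*h) = (1+b*b)*(1+f*f)" by (simp only: ad)
  have eq3: "(a*d)*(e*h) - (1+b*f)^2 = (b-f)^2" by (subst eq2) (simp add: power2_eq_square algebra_simps)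
  have eq4: "(a*h + d*e)^2 - (2*(1 + b*f))^2 = (a*h - d*e)^2 + 4*(b-f)^2" using eq1 unfolding eq3 .
  have "0 \<le> (a*h + d*e)^2 - (2*(1 + b*f))^2" unfolding eq4 by simp
  then have "(2*(1 + b*f))^2 \<le> (a*h + d*e)^2" by simp
  then have "2*(1 + b*f) \<le> a*h + d*e"
    by (rule power2_le_imp_le[OF _ less_imp_le[OF pos]])
  moreover have "mink X Y = (a*h + d*e - b*f - b*f)/2" using hx(1) hy(1) by (simp add: X Y)
  ultimately show ?thesis by (simp add: algebra_simps)
qed

lemma exists_orth_point:
  assumes "sym2 A" "det A < 0"
  shows "\<exists>Y \<in> hyp_plane. mink Y A = 0"
proof -
  obtain al be ga where A: "A = M2 al be be ga"
    using assms(1) by (metis M2_cases sym2_M2)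
  define D where "D = al*ga - be*be"
  have D: "D < 0" using assms(2) A D_def by simp
  define m where "m = (al + ga)/2"
  have D0: "D \<noteq> 0" using D by simp
  define Y' where "Y' = 1 *\<^sub>R M2 1 0 0 1 + (-m/D) *\<^sub>R A"
  have mIA: "mink (M2 1 0 0 1) A = m" by (simp add: A m_def)
  have mAA: "mink A A = D" by (simp add: A D_def field_simps)
  have dA: "det A = D" by (simp add: A D_def)
  have dY: "det Y' = 1 - m^2/D"
    unfolding Y'_def det_lin using D0 by (simp add: mIA dA field_simps power2_eq_square)
  have "m^2/D \<le> 0" using D by (intro divide_nonneg_neg) auto
  then have dpos: "det Y' > 0" using dY by linarith
  have tr: "Y'$1$1 + Y'$2$2 > 0"
  proof -
    have "Y'$1$1 + Y'$2$2 = 2 - 2*m^2/D" using D0 by (simp add: Y'_def A m_def field_simps power2_eq_square)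
    then show ?thesis using \<open>m^2/D \<le> 0\<close> by linarith
  qed
  have Y11: "Y'$1$1 > 0"
  proof (rule ccontr)
    assume a: "\<not> Y'$1$1 > 0"
    then have "Y'$2$2 > 0" using tr by simp
    moreover have "Y'$1$1 * Y'$2$2 > 0"
    proof -
      have "det Y' = Y'$1$1 * Y'$2$2 - Y'$1$2 * Y'$1$2" by (simp add: Y'_def A det_2)
      moreover have "Y'$1$2 * Y'$1$2 \<ge> 0" by simp
      ultimately show ?thesis using dpos by linarith
    qed
    ultimately show False using a by (simp add: zero_less_mult_iff)
  qed
  have mY: "mink Y' A = 0"
    unfolding Y'_def mink_lin using D0 by (simp add: mIA mAA)
  define Y where "Y = (1 / sqrt (det Y')) *\<^sub>R Y'"
  have "det Y = 1"
    using dpos det_lin[of "1 / sqrt (det Y')" Y' 0 Y'] by (simp add: Y_def power_divide)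
  moreover have "sym2 Y" by (simp add: Y_def Y'_def A)
  moreover have "Y$1$1 > 0" using Y11 dpos by (simp add: Y_def)
  moreover have "mink Y A = 0" using mY mink_lin[of "1 / sqrt (det Y')" Y' 0 Y' A] by (simp add: Y_def)
  ultimately show ?thesis by (auto simp: hyp_plane_def)
qed


lemma det_axisA: "det g = 1 \<Longrightarrow> det (axisA g) = 1 - (trace g)^2/4"
  by (cases g rule: M2_cases) (simp add: axisA_def power2_eq_square field_simps)

lemma sym2_axisA: "sym2 (axisA g)"
  by (simp add: axisA_def)

lemma hyp_sym_det: "Y \<in> hyp_plane \<Longrightarrow> sym2 Y \<and> det Y = 1"
  by (simp add: hyp_plane_def)

lemma transl_axis_char:
  assumes g: "det g = 1" "\<bar>trace g\<bar> > 2"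
  shows "transl_axis g = {Y \<in> hyp_plane. mink Y (axisA g) = 0}"
proof -
  define c0 where "c0 = (trace g)^2/2 - 1"
  have "2^2 < \<bar>trace g\<bar>^2" using g(2) by (intro power_strict_mono) auto
  then have "(trace g)^2 > 2^2" by simp
  then have c0: "c0 > 1" by (simp add: c0_def)
  have HD: "hdist Y (act g Y) = arcosh (c0 + 2 * (mink Y (axisA g))^2)" if "Y \<in> hyp_plane" for Y
    using disp_identity[OF g(1), of Y] hyp_sym_det[OF that] by (simp add: hdist_def c0_def)
  have "det (axisA g) < 0" using det_axisA[OF g(1)] \<open>(trace g)^2 > 2^2\<close> by simp
  then obtain Y0 where Y0: "Y0 \<in> hyp_plane" "mink Y0 (axisA g) = 0"
    using exists_orth_point[OF sym2_axisA] by blast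
  have low: "arcosh c0 \<le> arcosh (c0 + 2 * m^2)" for m :: real
  proof -
    have m2: "0 \<le> 2 * m^2" by simp
    have m3: "1 \<le> c0 + 2 * m^2" using c0 m2 by linarith
    have "\<not> arcosh (c0 + 2 * m^2) < arcosh c0"
      using c0 m3 by (subst arcosh_less_iff_real) auto
    then show ?thesis by simp
  qed
  have INF: "(INF Y\<in>hyp_plane. hdist Y (act g Y)) = arcosh c0"
  proof (rule cInf_eq_minimum)
    show "arcosh c0 \<in> (\<lambda>Y. hdist Y (act g Y)) ` hyp_plane"
      using HD[OF Y0(1)] Y0 by (auto intro!: image_eqI[of _ _ Y0])
    show "arcosh c0 \<le> x" if "x \<in> (\<lambda>Y. hdist Y (act g Y)) ` hyp_plane" for x
      using that HD low by auto
  qed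
  have "Y \<in> transl_axis g \<longleftrightarrow> Y \<in> hyp_plane \<and> mink Y (axisA g) = 0" for Y
  proof (cases "Y \<in> hyp_plane")
    case True
    have "arcosh (c0 + 2 * (mink Y (axisA g))^2) = arcosh c0 \<longleftrightarrow> mink Y (axisA g) = 0"
    proof
      assume e: "arcosh (c0 + 2 * (mink Y (axisA g))^2) = arcosh c0"
      show "mink Y (axisA g) = 0"
      proof (rule ccontr)
        assume "mink Y (axisA g) \<noteq> 0"
        then have "c0 < c0 + 2 * (mink Y (axisA g))^2" by simp
        then have "arcosh c0 < arcosh (c0 + 2 * (mink Y (axisA g))^2)"
          using c0 by (intro arcosh_real_strict_mono) auto
        then show False using e by simp
      qed
    qed simp
    then show ?thesis using True HD[OF True] INF by (simp add: transl_axis_def)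
  qed (simp add: transl_axis_def)
  then show ?thesis by blast
qed

lemma mink_N0: "mink (M2 x y y' z) N0 = (y + y')/2"
  by (simp add: N0_def)

lemma SQ0_sub: assumes "g \<in> SQ N0" shows "g \<in> SQ0"
proof -
  from assms obtain M where gS: "det g = 1" "\<bar>trace g\<bar> > 2" and M: "spacelike_unit M"
    "transl_axis g = geod M" "orth_geod M N0"
    and p': "\<exists>p \<in> transl_axis g \<inter> geod N0. act g p \<in> pos_side N0"
    unfolding SQ_def hyperbolic_el_def SL2_def by blast
  have TA: "transl_axis g = {Y \<in> hyp_plane. mink Y (axisA g) = 0}"
    using transl_axis_char[OF gS] .
  obtain a b c d where g: "g = M2 a b c d" by (rule M2_cases)
  define P where "P = (a - d)/2"
  have A: "axisA g = M2 (-b) P P c" by (simp add: g axisA_def P_def)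
  have ptform: "\<exists>x z. p = M2 x 0 0 z \<and> x > 0 \<and> x * z = 1 \<and> x * c = z * b"
    if "p \<in> transl_axis g" "p \<in> geod N0" for p
  proof -
    obtain x y y' z where p: "p = M2 x y y' z" by (rule M2_cases)
    have "p \<in> hyp_plane" "mink p (axisA g) = 0" using that(1) TA by auto
    moreover have "mink p N0 = 0" using that(2) by (simp add: geod_def)
    ultimately have "y = y'" "x*z - y*y' = 1" "x > 0" "y + y' = 0" "x*c - z*b = 0"
      by (auto simp: p hyp_plane_M2 mink_N0 A)
    then show ?thesis using p by (intro exI[of _ x] exI[of _ z]) auto
  qed
  from M(3) obtain p where p: "p \<in> geod M \<inter> geod N0" and PP: "\<forall>u w.
      sym2 u \<and> mink u p = 0 \<and> mink u M = 0 \<and> sym2 w \<and> mink w p = 0 \<and> mink w N0 = 0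
      \<longrightarrow> mink u w = 0" unfolding orth_geod_def by blast
  have pT: "p \<in> transl_axis g" using p M(2) by simp
  obtain x z where xz: "p = M2 x 0 0 z" "x > 0" "x * z = 1" "x * c = z * b"
    using ptform[OF pT] p by blast
  define u where "u = M2 (x*P) (x*c) (x*c) (-P*z)"
  define w where "w = M2 x 0 0 (-z)"
  have up: "mink u p = 0" by (simp add: u_def xz(1) algebra_simps)
  have uA: "mink u (axisA g) = 0"
  proof -
    have "mink u (axisA g) = P*(z*b - x*c)/2" by (simp add: u_def A algebra_simps)
    then show ?thesis using xz(4) by simp
  qed
  have uM: "mink u M = 0"
  proof -
    define t where "t = 1 / (2 * (\<bar>P\<bar> + 1))"
    have Pa: "\<bar>P\<bar> \<ge> 0" by simp
    have den: "2 * (\<bar>P\<bar> + 1) > 0" using Pa by (intro mult_pos_pos add_nonneg_pos) auto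
    have t0: "t > 0" using den by (simp add: t_def)
    have "\<bar>t * P\<bar> = \<bar>P\<bar> / (2 * (\<bar>P\<bar> + 1))" using den by (simp add: t_def abs_mult)
    also have "\<dots> \<le> 1/2" using den by (simp add: divide_le_eq)
    finally have tP: "\<bar>t * P\<bar> \<le> 1/2" .
    have "det u = - (P*P*(x*z)) - (x*c)*(x*c)" by (simp add: u_def algebra_simps)
    then have "det u = - (P*P) - (x*c)*(x*c)" using xz(3) by simp
    moreover have "P*P \<ge> 0" "(x*c)*(x*c) \<ge> 0" by simp_all
    ultimately have du: "det u \<le> 0" by linarith
    define sq where "sq = sqrt (1 - t^2 * det u)"
    have tdu: "t^2 * det u \<le> 0" using du by (simp add: mult_nonneg_nonpos)
    have sq1: "sq \<ge> 1" using tdu by (simp add: sq_def)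
    define gam where "gam = sq *\<^sub>R p + t *\<^sub>R u"
    have dp: "det p = 1" using xz by simp
    have "det gam = sq^2 - t^2 * (- det u)" 
      unfolding gam_def det_lin using dp mink_sym[of p u] up by (simp add: power2_eq_square)
    also have "sq^2 = 1 - t^2 * det u" unfolding sq_def using tdu by simp
    finally have dg: "det gam = 1" by simp
    have g11: "gam$1$1 = sq * x + t * (x * P)" by (simp add: gam_def xz(1) u_def)
    have "t * (x * P) \<ge> - x / 2"
    proof -
      have "x * (t*P) \<ge> x * (-1/2)" using tP xz(2) by (intro mult_left_mono) auto
      then show ?thesis by (simp add: algebra_simps)
    qed
    moreover have "sq * x \<ge> x" using sq1 xz(2) by simp
    ultimately have "gam$1$1 > 0" using g11 xz(2) by linarith
    moreover have "sym2 gam" by (simp add: gam_def xz(1) u_def)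
    ultimately have "gam \<in> hyp_plane" using dg by (simp add: hyp_plane_def)
    moreover have "mink gam (axisA g) = 0"
      unfolding gam_def mink_lin using uA pT TA by simp
    ultimately have "gam \<in> geod M" using TA M(2) by blast
    then have "mink gam M = 0" by (simp add: geod_def)
    moreover have "mink p M = 0" using p by (simp add: geod_def)
    ultimately have "t * mink u M = 0" unfolding gam_def mink_lin by simp
    then show ?thesis using t0 by simp
  qed
  have "mink u w = 0"
    using PP[rule_format, of u w] up uM
    by (simp add: u_def w_def xz(1) N0_def)
  moreover have "mink u w = - P * (x * z)" by (simp add: u_def w_def algebra_simps)
  ultimately have P0: "P = 0" using xz(3) by simp
  then have ad: "a = d" by (simp add: P_def)
  have a1: "\<bar>a\<bar> > 1" using gS(2) ad by (simp add: g)
  from p' obtain q where q: "q \<in> transl_axis g" "q \<in> geod N0" "act g q \<in> pos_side N0" by blast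
  obtain x' z' where xz': "q = M2 x' 0 0 z'" "x' > 0" "x' * z' = 1" "x' * c = z' * b"
    using ptform[OF q(1,2)] by blast
  have "mink (act g q) N0 > 0" using q(3) by (simp add: pos_side_def)
  then have "a * (x' * c) + a * (z' * b) > 0" using ad by (simp add: g xz'(1) N0_def algebra_simps)
  then have "a * (x' * c) > 0" using xz'(4) by (simp add: mult.commute)
  then have ac: "a * c * x' > 0" by (simp add: algebra_simps)
  have "b = x' * x' * c" using xz' by (metis mult.assoc mult.commute mult_1 )
  then have "a * b = (a * c * x') * x'" by (simp add: algebra_simps)
  then have "a * b > 0" by (simp only:) (rule mult_pos_pos[OF ac xz'(2)])
  then show ?thesis using gS ad a1 by (simp add: SQ0_def g)
qed


lemma det_scale: "det (r *\<^sub>R (X::real^2^2)) = r^2 * det X"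
  by (cases X rule: M2_cases) (simp add: power2_eq_square algebra_simps)

lemma SQ0_sup: assumes "g \<in> SQ0" shows "g \<in> SQ N0"
proof -
  obtain a b c d where g: "g = M2 a b c d" by (rule M2_cases)
  have h: "d = a" "a*a - b*c = 1" "\<bar>a\<bar> > 1" "a*b > 0" using assms by (auto simp: SQ0_def g)
  have "a*a > 1" using h(3) by (metis abs_mult_self_eq less_1_mult order_less_trans zero_less_one abs_ge_zero not_less)
  then have bc: "b*c > 0" using h(2) by linarith
  have b0: "b \<noteq> 0" and c0: "c \<noteq> 0" using bc by auto
  have bdc: "b/c > 0" using bc by (metis divide_pos_pos zero_less_mult_iff divide_neg_neg)
  define x where "x = sqrt (b/c)"
  have x0: "x > 0" using bdc by (simp add: x_def)
  have "x*x = \<bar>b/c\<bar>" unfolding x_def by (rule real_sqrt_mult_self)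
  then have xx: "x*x = b/c" using abs_of_pos[OF bdc] by simp
  then have xxc: "x*x*c = b" using c0 by simp
  define z where "z = 1/x"
  have xz: "x*z = 1" using x0 by (simp add: z_def)
  have xcz: "x*c = z*b"
  proof -
    have "z*b = z*(x*x*c)" using xxc by simp
    also have "\<dots> = (x*z)*(x*c)" by (simp add: algebra_simps)
    finally show ?thesis using xz by simp
  qed
  have gdet: "det g = 1" "\<bar>trace g\<bar> > 2" using h by (auto simp: g)
  have A: "axisA g = M2 (-b) 0 0 c" using h(1) by (simp add: g axisA_def)
  define r where "r = 1 / sqrt (b*c)"
  have r0: "r > 0" using bc by (simp add: r_def)
  define M where "M = r *\<^sub>R axisA g"
  have SU: "spacelike_unit M"
    using bc b0 c0 by (simp add: spacelike_unit_def M_def det_scale A r_def power_divide sym2_def)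
  have TAM: "transl_axis g = geod M"
  proof -
    have "mink Y M = 0 \<longleftrightarrow> mink Y (axisA g) = 0" for Y using r0 by (simp add: M_def mink_scale2)
    then show ?thesis using transl_axis_char[OF gdet] by (auto simp: geod_def)
  qed
  define p where "p = M2 x 0 0 z"
  have php: "p \<in> hyp_plane" using x0 xz by (simp add: p_def hyp_plane_M2)
  have pA: "mink p (axisA g) = 0" using xcz by (simp add: p_def A)
  have pM: "mink p M = 0" using pA by (simp add: M_def mink_scale2)
  have pN: "mink p N0 = 0" by (simp add: p_def N0_def)
  have pT: "p \<in> transl_axis g" using TAM pM php by (simp add: geod_def)
  have OG: "orth_geod M N0"
    unfolding orth_geod_def
  proof (intro bexI allI impI)
    show "p \<in> geod M \<inter> geod N0" using php pM pN by (simp add: geod_def)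
    fix u w assume H: "sym2 u \<and> mink u p = 0 \<and> mink u M = 0 \<and> sym2 w \<and> mink w p = 0 \<and> mink w N0 = 0"
    obtain u1 u2 u2' u3 where u: "u = M2 u1 u2 u2' u3" by (rule M2_cases)
    obtain w1 w2 w2' w3 where w: "w = M2 w1 w2 w2' w3" by (rule M2_cases)
    have uA: "mink u (axisA g) = 0" using H r0 by (simp add: M_def mink_scale2)
    have e1: "u1*z + u3*x = 0" and e2: "u1*c = u3*b" and e3: "u2 = u2'"
      using H uA by (auto simp: u p_def A)
    have e4: "w2 = 0" "w2' = 0" using H by (auto simp: w N0_def)
    have "u1 = - u3*(x*x)"
    proof -
      have "x*(u1*z + u3*x) = 0" using e1 by simp
      then have "u1*(x*z) + u3*(x*x) = 0" by (simp add: algebra_simps)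
      then show ?thesis using xz by simp
    qed
    then have "u3*(x*x*c + b) = 0" using e2 by (simp add: algebra_simps)
    then have "u3*(2*b) = 0" using xxc by simp
    then have u30: "u3 = 0" using b0 by simp
    then have u10: "u1 = 0" using \<open>u1 = - u3*(x*x)\<close> by simp
    show "mink u w = 0" using u10 u30 e4 by (simp add: u w)
  qed
  have POS: "act g p \<in> pos_side N0"
  proof -
    have "act g p \<in> hyp_plane" using hyp_act[OF php gdet(1)] .
    moreover have "a*c > 0"
    proof -
      have "(a*b)*(b*c) > 0" using h(4) bc by simp
      then have "(a*c)*(b*b) > 0" by (simp add: algebra_simps)
      then show ?thesis using b0 by (simp add: zero_less_mult_iff)
    qed
    moreover have "mink (act g p) N0 = 2*(a*c)*x" using h(1) xcz
      by (simp add: g p_def N0_def algebra_simps)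
    ultimately show ?thesis using x0 by (simp add: pos_side_def)
  qed
  have E1: "\<exists>M. spacelike_unit M \<and> transl_axis g = geod M \<and> orth_geod M N0"
    using SU TAM OG by blast
  have E2: "\<exists>p \<in> transl_axis g \<inter> geod N0. act g p \<in> pos_side N0"
    using pT pN php POS by (auto simp: geod_def)
  show ?thesis using E1 E2 gdet unfolding SQ_def hyperbolic_el_def SL2_def by blast
qed

lemma SQ_N0: "SQ N0 = SQ0"
  using SQ0_sub SQ0_sup by blast


lemma bl_diag: "bounded_linear (\<lambda>g::real^2^2. g$1$1 - g$2$2)"
proof -
  have "bounded_linear (\<lambda>g::real^2^2. g$i$j)" for i j
    using bounded_linear_compose[OF bounded_linear_vec_nth[of j] bounded_linear_vec_nth[of i]]
    by (simp add: o_def)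
  then show ?thesis by (intro bounded_linear_sub)
qed

lemma surf_tangent_diag:
  assumes S: "S \<subseteq> {g. g$1$1 = g$2$2}" and v: "v \<in> surf_tangent S p"
  shows "v$1$1 = v$2$2"
proof -
  from v obtain gam e where e: "0 < e" "\<forall>s. \<bar>s\<bar> < e \<longrightarrow> gam s \<in> S"
    and d: "(gam has_vector_derivative v) (at 0)"
    unfolding surf_tangent_def by blast
  have "((\<lambda>s. gam s $1$1 - gam s $2$2) has_vector_derivative (v$1$1 - v$2$2)) (at 0)"
    using bounded_linear.has_vector_derivative[OF bl_diag d] by simp
  then have D: "((\<lambda>s. gam s $1$1 - gam s $2$2) has_field_derivative (v$1$1 - v$2$2)) (at 0)"
    by (simp add: has_real_derivative_iff_has_vector_derivative)
  have "\<forall>y. \<bar>0 - y\<bar> < e \<longrightarrow> gam 0 $1$1 - gam 0 $2$2 = gam y $1$1 - gam y $2$2"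
  proof (intro allI impI)
    fix y :: real assume "\<bar>0 - y\<bar> < e"
    then have "gam y \<in> S" "gam 0 \<in> S" using e by auto
    then have "gam y \<in> {g. g$1$1 = g$2$2}" "gam 0 \<in> {g. g$1$1 = g$2$2}" using S by blast+
    then show "gam 0 $1$1 - gam 0 $2$2 = gam y $1$1 - gam y $2$2" by simp
  qed
  from DERIV_local_const[OF D e(1) this] show ?thesis by simp
qed

lemma meets_affine:
  assumes S: "S \<subseteq> {g. g$1$1 = g$2$2}" and v: "v$1$1 \<noteq> v$2$2"
  shows "meets_transv (\<lambda>t. h0 + t *\<^sub>R v) S \<longleftrightarrow> (\<exists>t>0. h0 + t *\<^sub>R v \<in> S)"
proof
  assume "\<exists>t>0. h0 + t *\<^sub>R v \<in> S"
  moreover have "(\<lambda>t. h0 + t *\<^sub>R v) differentiable (at t) \<and>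
      vector_derivative (\<lambda>t. h0 + t *\<^sub>R v) (at t) \<notin> surf_tangent S (h0 + t *\<^sub>R v)" for t
  proof -
    have D: "((\<lambda>t. h0 + t *\<^sub>R v) has_vector_derivative v) (at t)"
      unfolding has_vector_derivative_def by (auto intro!: derivative_eq_intros)
    then have "vector_derivative (\<lambda>t. h0 + t *\<^sub>R v) (at t) = v" by (rule vector_derivative_at)
    then show ?thesis using D differentiableI_vector surf_tangent_diag[OF S] v by metis
  qed
  ultimately show "meets_transv (\<lambda>t. h0 + t *\<^sub>R v) S" unfolding meets_transv_def by blast
qed (auto simp: meets_transv_def)

lemma SQ0_diag: "SQ0 \<subseteq> {g. g$1$1 = g$2$2}"
  by (auto simp: SQ0_def)

lemma inSQ0_crit:
  assumes "det g = 1" "g$1$1 = g$2$2" "g$1$1 * S = A1" "g$1$2 * S = A2" "g$2$1 * S = A3"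
    "A1 < 0" "A2 < 0" "A3 < 0"
  shows "g \<in> SQ0"
proof -
  have S: "S \<noteq> 0" using assms by auto
  have SS: "S*S > 0" using S not_real_square_gt_zero by blast
  have "(S*S) * (g$1$1 * g$1$2) = (g$1$1 * S) * (g$1$2 * S)" by (simp add: algebra_simps)
  also have "\<dots> = A1 * A2" using assms(3,4) by simp
  finally have "(S*S) * (g$1$1 * g$1$2) = A1 * A2" .
  moreover have "A1 * A2 > 0" using assms by (simp add: mult_neg_neg)
  ultimately have "0 < (S*S) * (g$1$1 * g$1$2)" by simp
  then have p1: "g$1$1 * g$1$2 > 0" using zero_less_mult_pos SS by blast
  have "(S*S) * (g$1$2 * g$2$1) = (g$1$2 * S) * (g$2$1 * S)" by (simp add: algebra_simps)
  also have "\<dots> = A2 * A3" using assms(4,5) by simp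
  finally have "(S*S) * (g$1$2 * g$2$1) = A2 * A3" .
  moreover have "A2 * A3 > 0" using assms by (simp add: mult_neg_neg)
  ultimately have "0 < (S*S) * (g$1$2 * g$2$1)" by simp
  then have p2: "g$1$2 * g$2$1 > 0" using zero_less_mult_pos SS by blast
  have "g$1$1 * g$1$1 = 1 + g$1$2 * g$2$1" using assms(1,2) by (simp add: det_2)
  then have "g$1$1 * g$1$1 > 1" using p2 by simp
  have "\<bar>g$1$1\<bar> > 1"
  proof (rule ccontr)
    assume "\<not> \<bar>g$1$1\<bar> > 1"
    then have "\<bar>g$1$1\<bar> * \<bar>g$1$1\<bar> \<le> 1" by (intro mult_le_one) auto
    then show False using \<open>g$1$1 * g$1$1 > 1\<close> by (simp add: abs_mult_self_eq)
  qed
  then show ?thesis using assms p1 by (simp add: SQ0_def)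
qed


lemma par_curve_M2: "par_curve (M2 x y z w) t = M2 (1 + t*x) (t*y) (t*z) (1 + t*w)"
  by (simp add: par_curve_def M2_mat1)

lemma core:
  fixes h1 h2 h3 h4 k1 k2 k3 k4 be ga :: real
  assumes dH: "h1*h4 - h2*h3 = 1" and dK: "k1*k4 - k2*k3 = 1"
    and K: "k3*k4 > 0" "k1*k3 < 0" "k2*k4 < 0"
    and Hh: "h3*h4 > 0" "h1*h3 < 0" "h2*h4 < 0"
    and B: "h1^2 < k1^2" "h3^2 < k3^2" "h2^2 < k2^2" "h4^2 < k4^2"
    and be: "be > 0" and ga: "ga > 0"
  shows "exactly_one3 (M2 h1 h2 h3 h4 ** adj2 (M2 k1 k2 k3 k4) \<in> SQ0)
     (meets_transv (\<lambda>t. M2 h1 h2 h3 h4 ** par_curve (M2 0 be 0 0) t ** adj2 (M2 k1 k2 k3 k4)) SQ0)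
     (meets_transv (\<lambda>t. M2 h1 h2 h3 h4 ** par_curve (M2 0 0 ga 0) t ** adj2 (M2 k1 k2 k3 k4)) SQ0)"
proof -
  define h0 where "h0 = M2 (h1*k4 - h2*k3) (h2*k1 - h1*k2) (h3*k4 - h4*k3) (h4*k1 - h3*k2)"
  define v1 where "v1 = M2 (-be*h1*k3) (be*h1*k1) (-be*h3*k3) (be*h3*k1)"
  define v2 where "v2 = M2 (ga*h2*k4) (-ga*h2*k2) (ga*h4*k4) (-ga*h4*k2)"
  have h0e: "M2 h1 h2 h3 h4 ** adj2 (M2 k1 k2 k3 k4) = h0"
    by (simp add: h0_def algebra_simps)
  have c1e: "M2 h1 h2 h3 h4 ** par_curve (M2 0 be 0 0) t ** adj2 (M2 k1 k2 k3 k4) = h0 + t *\<^sub>R v1" for t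
    by (simp add: par_curve_M2 h0_def v1_def algebra_simps)
  have c2e: "M2 h1 h2 h3 h4 ** par_curve (M2 0 0 ga 0) t ** adj2 (M2 k1 k2 k3 k4) = h0 + t *\<^sub>R v2" for t
    by (simp add: par_curve_M2 h0_def v2_def algebra_simps)
  define F0 where "F0 = h1*k4 - h2*k3 - (h4*k1 - h3*k2)"
  define S where "S = h1*k3 + h3*k1"
  define S' where "S' = h2*k4 + h4*k2"
  have detc1: "det (h0 + t *\<^sub>R v1) = 1" for t
  proof -
    have "det (h0 + t *\<^sub>R v1) = (h1*h4 - h2*h3) * (k1*k4 - k2*k3)"
      by (simp add: h0_def v1_def algebra_simps)
    then show ?thesis using dH dK by simp
  qed
  have detc2: "det (h0 + t *\<^sub>R v2) = 1" for t
  proof -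
    have "det (h0 + t *\<^sub>R v2) = (h1*h4 - h2*h3) * (k1*k4 - k2*k3)"
      by (simp add: h0_def v2_def algebra_simps)
    then show ?thesis using dH dK by simp
  qed
  have F1: "(h0 + t *\<^sub>R v1)$1$1 - (h0 + t *\<^sub>R v1)$2$2 = F0 - t*be*S" for t
    by (simp add: h0_def v1_def F0_def S_def algebra_simps)
  have F2: "(h0 + t *\<^sub>R v2)$1$1 - (h0 + t *\<^sub>R v2)$2$2 = F0 + t*ga*S'" for t
    by (simp add: h0_def v2_def F0_def S'_def algebra_simps)
  have k3: "k3 \<noteq> 0" and k4: "k4 \<noteq> 0" using K by auto
  have h3: "h3 \<noteq> 0" and h4: "h4 \<noteq> 0" using Hh by auto
  have kk3: "k3*k3 > 0" and kk4: "k4*k4 > 0" and hh3: "h3*h3 > 0" and hh4: "h4*h4 > 0"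
    using k3 k4 h3 h4 not_real_square_gt_zero by blast+
  have "S * (h3*k3) = (h1*h3)*(k3*k3) + (h3*h3)*(k1*k3)" by (simp add: S_def algebra_simps)
  moreover have "(h1*h3)*(k3*k3) < 0" using Hh(2) kk3 by (rule mult_neg_pos)
  moreover have "(h3*h3)*(k1*k3) < 0" using hh3 K(2) by (rule mult_pos_neg)
  ultimately have s1: "S * (h3*k3) < 0" by simp
  have "S' * (h4*k4) = (h2*h4)*(k4*k4) + (h4*h4)*(k2*k4)" by (simp add: S'_def algebra_simps)
  moreover have "(h2*h4)*(k4*k4) < 0" using Hh(3) kk4 by (rule mult_neg_pos)
  moreover have "(h4*h4)*(k2*k4) < 0" using hh4 K(3) by (rule mult_pos_neg)
  ultimately have s2: "S' * (h4*k4) < 0" by simp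
  have "(h3*k3)*(h4*k4) = (h3*h4)*(k3*k4)" by (simp add: algebra_simps)
  have s3: "(h3*k3)*(h4*k4) > 0" unfolding \<open>(h3*k3)*(h4*k4) = (h3*h4)*(k3*k4)\<close> by (rule mult_pos_pos[OF Hh(1) K(1)])
  have "(S*(h3*k3))*(S'*(h4*k4)) > 0" using s1 s2 by (simp add: mult_neg_neg)
  then have "0 < (S*S')*((h3*k3)*(h4*k4))" by (simp add: ac_simps)
  then have SS': "S*S' > 0" using s3 zero_less_mult_pos2 by blast
  have S0: "S \<noteq> 0" and S'0: "S' \<noteq> 0" using SS' by auto
  have SSp: "S*S > 0" "S'*S' > 0" using S0 S'0 not_real_square_gt_zero by blast+
  have A1n: "k1*k3 + h1*h3 < 0" using K Hh by simp
  have A2n: "h1^2 - k1^2 < 0" using B by simp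
  have A3n: "h3^2 - k3^2 < 0" using B by simp
  have A1n': "k2*k4 + h2*h4 < 0" using K Hh by simp
  have A2n': "h2^2 - k2^2 < 0" using B by simp
  have A3n': "h4^2 - k4^2 < 0" using B by simp
  have cross1: "h0 + t *\<^sub>R v1 \<in> SQ0" if t: "t*be*S = F0" for t
  proof (rule inSQ0_crit[of _ S "k1*k3 + h1*h3" "h1^2 - k1^2" "h3^2 - k3^2"])
    show "det (h0 + t *\<^sub>R v1) = 1" by (rule detc1)
    show "(h0 + t *\<^sub>R v1)$1$1 = (h0 + t *\<^sub>R v1)$2$2" using F1[of t] t by simp
    have "(h0 + t *\<^sub>R v1)$1$1 * S = (h1*k4 - h2*k3)*S - h1*k3*(t*be*S)"
      by (simp add: h0_def v1_def algebra_simps)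
    also have "\<dots> = (h1*k4 - h2*k3)*S - h1*k3*F0" using t by simp
    also have "\<dots> = h1*h3*(k1*k4 - k2*k3) + k1*k3*(h1*h4 - h2*h3)"
      by (simp add: S_def F0_def algebra_simps)
    finally show "(h0 + t *\<^sub>R v1)$1$1 * S = k1*k3 + h1*h3" using dH dK by simp
    have "(h0 + t *\<^sub>R v1)$1$2 * S = (h2*k1 - h1*k2)*S + h1*k1*(t*be*S)"
      by (simp add: h0_def v1_def algebra_simps)
    also have "\<dots> = (h2*k1 - h1*k2)*S + h1*k1*F0" using t by simp
    also have "\<dots> = h1^2*(k1*k4 - k2*k3) - k1^2*(h1*h4 - h2*h3)"
      by (simp add: S_def F0_def algebra_simps power2_eq_square)
    finally show "(h0 + t *\<^sub>R v1)$1$2 * S = h1^2 - k1^2" using dH dK by simp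
    have "(h0 + t *\<^sub>R v1)$2$1 * S = (h3*k4 - h4*k3)*S - h3*k3*(t*be*S)"
      by (simp add: h0_def v1_def algebra_simps)
    also have "\<dots> = (h3*k4 - h4*k3)*S - h3*k3*F0" using t by simp
    also have "\<dots> = h3^2*(k1*k4 - k2*k3) - k3^2*(h1*h4 - h2*h3)"
      by (simp add: S_def F0_def algebra_simps power2_eq_square)
    finally show "(h0 + t *\<^sub>R v1)$2$1 * S = h3^2 - k3^2" using dH dK by simp
  qed (use A1n A2n A3n in auto)
  have cross2: "h0 + t *\<^sub>R v2 \<in> SQ0" if t: "t*ga*S' = - F0" for t
  proof (rule inSQ0_crit[of _ S' "k2*k4 + h2*h4" "h2^2 - k2^2" "h4^2 - k4^2"])
    show "det (h0 + t *\<^sub>R v2) = 1" by (rule detc2)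
    show "(h0 + t *\<^sub>R v2)$1$1 = (h0 + t *\<^sub>R v2)$2$2" using F2[of t] t by simp
    have "(h0 + t *\<^sub>R v2)$1$1 * S' = (h1*k4 - h2*k3)*S' + h2*k4*(t*ga*S')"
      by (simp add: h0_def v2_def algebra_simps)
    also have "\<dots> = (h1*k4 - h2*k3)*S' - h2*k4*F0" using t by simp
    also have "\<dots> = h2*h4*(k1*k4 - k2*k3) + k2*k4*(h1*h4 - h2*h3)"
      by (simp add: S'_def F0_def algebra_simps)
    finally show "(h0 + t *\<^sub>R v2)$1$1 * S' = k2*k4 + h2*h4" using dH dK by simp
    have "(h0 + t *\<^sub>R v2)$1$2 * S' = (h2*k1 - h1*k2)*S' - h2*k2*(t*ga*S')"
      by (simp add: h0_def v2_def algebra_simps)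
    also have "\<dots> = (h2*k1 - h1*k2)*S' + h2*k2*F0" using t by simp
    also have "\<dots> = h2^2*(k1*k4 - k2*k3) - k2^2*(h1*h4 - h2*h3)"
      by (simp add: S'_def F0_def algebra_simps power2_eq_square)
    finally show "(h0 + t *\<^sub>R v2)$1$2 * S' = h2^2 - k2^2" using dH dK by simp
    have "(h0 + t *\<^sub>R v2)$2$1 * S' = (h3*k4 - h4*k3)*S' + h4*k4*(t*ga*S')"
      by (simp add: h0_def v2_def algebra_simps)
    also have "\<dots> = (h3*k4 - h4*k3)*S' - h4*k4*F0" using t by simp
    also have "\<dots> = h4^2*(k1*k4 - k2*k3) - k4^2*(h1*h4 - h2*h3)"
      by (simp add: S'_def F0_def algebra_simps power2_eq_square)
    finally show "(h0 + t *\<^sub>R v2)$2$1 * S' = h4^2 - k4^2" using dH dK by simp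
  qed (use A1n' A2n' A3n' in auto)
  have on1: "t*be*S = F0" if "h0 + t *\<^sub>R v1 \<in> SQ0" for t
    using that SQ0_diag F1[of t] by auto
  have on2: "t*ga*S' = - F0" if "h0 + t *\<^sub>R v2 \<in> SQ0" for t
    using that SQ0_diag F2[of t] by auto
  have v1d: "v1$1$1 \<noteq> v1$2$2"
  proof -
    have "v1$1$1 - v1$2$2 = - be * S" by (simp add: v1_def S_def algebra_simps)
    then show ?thesis using be S0 by auto
  qed
  have v2d: "v2$1$1 \<noteq> v2$2$2"
  proof -
    have "v2$1$1 - v2$2$2 = ga * S'" by (simp add: v2_def S'_def algebra_simps)
    then show ?thesis using ga S'0 by auto
  qed
  have M1: "meets_transv (\<lambda>t. h0 + t *\<^sub>R v1) SQ0 \<longleftrightarrow> (\<exists>t>0. h0 + t *\<^sub>R v1 \<in> SQ0)"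
    by (rule meets_affine[OF SQ0_diag v1d])
  have M2': "meets_transv (\<lambda>t. h0 + t *\<^sub>R v2) SQ0 \<longleftrightarrow> (\<exists>t>0. h0 + t *\<^sub>R v2 \<in> SQ0)"
    by (rule meets_affine[OF SQ0_diag v2d])
  have h0F: "h0 \<in> SQ0 \<longleftrightarrow> F0 = 0"
  proof
    assume "h0 \<in> SQ0" then show "F0 = 0" using on1[of 0] by simp
  next
    assume "F0 = 0" then show "h0 \<in> SQ0" using cross1[of 0] by simp
  qed
  have R1: "(\<exists>t>0. h0 + t *\<^sub>R v1 \<in> SQ0) \<longleftrightarrow> F0 * S > 0"
  proof
    assume "\<exists>t>0. h0 + t *\<^sub>R v1 \<in> SQ0"
    then obtain t where "t > 0" "t*be*S = F0" using on1 by blast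
    then have e: "F0 * S = (t*be)*(S*S)" by (simp add: algebra_simps)
    have "t*be > 0" using \<open>t>0\<close> be by simp
    from mult_pos_pos[OF this SSp(1)] show "F0 * S > 0" unfolding e .
  next
    assume FS: "F0 * S > 0"
    define t where "t = F0 / (be * S)"
    have tq: "t = (F0*S) / (be * (S*S))" using S0 by (simp add: t_def)
    have d: "be * (S*S) > 0" using be SSp by simp
    have "t > 0" unfolding tq by (rule divide_pos_pos[OF FS d])
    moreover have "t*be*S = F0" using S0 be by (simp add: t_def)
    ultimately show "\<exists>t>0. h0 + t *\<^sub>R v1 \<in> SQ0" using cross1 by blast
  qed
  have R2: "(\<exists>t>0. h0 + t *\<^sub>R v2 \<in> SQ0) \<longleftrightarrow> F0 * S' < 0"
  proof
    assume "\<exists>t>0. h0 + t *\<^sub>R v2 \<in> SQ0"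
    then obtain t where "t > 0" "t*ga*S' = - F0" using on2 by blast
    then have e: "F0 * S' = - ((t*ga)*(S'*S'))" by (simp add: algebra_simps)
    have "t*ga > 0" using \<open>t>0\<close> ga by simp
    from mult_pos_pos[OF this SSp(2)] show "F0 * S' < 0" unfolding e by linarith
  next
    assume FS: "F0 * S' < 0"
    define t where "t = - F0 / (ga * S')"
    have tq: "t = (- (F0*S')) / (ga * (S'*S'))" using S'0 by (simp add: t_def)
    have d: "ga * (S'*S') > 0" using ga SSp by simp
    have FS': "- (F0*S') > 0" using FS by simp
    have "t > 0" unfolding tq by (rule divide_pos_pos[OF FS' d])
    moreover have "t*ga*S' = - F0" using S'0 ga by (simp add: t_def)
    ultimately show "\<exists>t>0. h0 + t *\<^sub>R v2 \<in> SQ0" using cross2 by blast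
  qed
  have signs: "(F0 * S > 0 \<longleftrightarrow> F0 * S' > 0) \<and> (F0 * S < 0 \<longleftrightarrow> F0 * S' < 0)"
    using SS' by (auto simp: zero_less_mult_iff mult_less_0_iff)
  have X: "exactly_one3 (F0 = 0) (0 < F0 * S) (F0 * S' < 0)"
  proof (cases "F0 = 0")
    case True then show ?thesis by (simp add: exactly_one3_def)
  next
    case False
    then have "F0 * S \<noteq> 0" using S0 by simp
    then consider "F0 * S > 0" | "F0 * S < 0" by linarith
    then show ?thesis
    proof cases
      case 1 then show ?thesis using signs False by (simp add: exactly_one3_def)
    next
      case 2 then show ?thesis using signs False by (simp add: exactly_one3_def)
    qed
  qed
  show ?thesis unfolding h0e c1e c2e M1 M2' R1 R2 h0F by (rule X)
qed


lemma surf_tangent_lin: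
  fixes L :: "real^2^2 \<Rightarrow> real^2^2"
  assumes L: "linear L" and v: "v \<in> surf_tangent S p"
  shows "L v \<in> surf_tangent (L ` S) (L p)"
proof -
  have bl: "bounded_linear L" using L linear_conv_bounded_linear by blast
  from v obtain gam e where e: "0 < e" "gam 0 = p" "\<forall>s. \<bar>s\<bar> < e \<longrightarrow> gam s \<in> S"
    and d: "(gam has_vector_derivative v) (at 0)"
    unfolding surf_tangent_def by blast
  have "((\<lambda>s. L (gam s)) has_vector_derivative L v) (at 0)"
    by (rule bounded_linear.has_vector_derivative[OF bl d])
  moreover have "\<forall>s. \<bar>s\<bar> < e \<longrightarrow> L (gam s) \<in> L ` S" using e by auto
  ultimately show ?thesis unfolding surf_tangent_def using e by (intro CollectI exI[of _ "\<lambda>s. L (gam s)"] exI[of _ e]) auto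
qed

lemma meets_transv_lin1:
  fixes L Li :: "real^2^2 \<Rightarrow> real^2^2"
  assumes L: "linear L" "linear Li" "\<And>x. Li (L x) = x"
    and m: "meets_transv c S"
  shows "meets_transv (\<lambda>t. L (c t)) (L ` S)"
proof -
  have bl: "bounded_linear L" using L(1) linear_conv_bounded_linear by blast
  have bk: "Li ` (L ` S) = S" using L(3) by (simp add: image_image)
  from m obtain t0 where "t0 > 0" "c t0 \<in> S" unfolding meets_transv_def by blast
  then have ex: "\<exists>t>0. L (c t) \<in> L ` S" by blast
  have "(\<lambda>t. L (c t)) differentiable (at t) \<and>
     vector_derivative (\<lambda>t. L (c t)) (at t) \<notin> surf_tangent (L ` S) (L (c t))"
    if t: "t > 0" "L (c t) \<in> L ` S" for t
  proof -
    have ct: "c t \<in> S" using t(2) L(3) by (metis imageE)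
    then have cd: "c differentiable (at t)" and nt: "vector_derivative c (at t) \<notin> surf_tangent S (c t)"
      using m t(1) unfolding meets_transv_def by blast+
    have D: "(c has_vector_derivative vector_derivative c (at t)) (at t)"
      using cd vector_derivative_works by blast
    have DL: "((\<lambda>t. L (c t)) has_vector_derivative L (vector_derivative c (at t))) (at t)"
      by (rule bounded_linear.has_vector_derivative[OF bl D])
    then have vd: "vector_derivative (\<lambda>t. L (c t)) (at t) = L (vector_derivative c (at t))"
      by (rule vector_derivative_at)
    have "L (vector_derivative c (at t)) \<notin> surf_tangent (L ` S) (L (c t))"
    proof
      assume "L (vector_derivative c (at t)) \<in> surf_tangent (L ` S) (L (c t))"
      from surf_tangent_lin[OF L(2) this] have "vector_derivative c (at t) \<in> surf_tangent S (c t)"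
        using bk L(3) by simp
      then show False using nt by blast
    qed
    then show ?thesis using DL differentiableI_vector vd by metis
  qed
  then show ?thesis using ex unfolding meets_transv_def by blast
qed

lemma meets_transv_lin:
  fixes L Li :: "real^2^2 \<Rightarrow> real^2^2"
  assumes L: "linear L" "linear Li" "\<And>x. Li (L x) = x" "\<And>y. L (Li y) = y"
  shows "meets_transv (\<lambda>t. L (c t)) (L ` S) \<longleftrightarrow> meets_transv c S"
proof
  assume "meets_transv (\<lambda>t. L (c t)) (L ` S)"
  from meets_transv_lin1[OF L(2) L(1) L(4) this] show "meets_transv c S"
    using L(3) by (simp add: image_image)
qed (rule meets_transv_lin1[OF L(1) L(2) L(3)])


lemma act_N0: "act (M2 p q r w) N0 = M2 (-2*p*q) (-(p*w + q*r)) (-(p*w + q*r)) (-2*r*w)"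
  by (simp add: N0_def algebra_simps)

lemma exists_frame:
  assumes "spacelike_unit N"
  shows "\<exists>k. det k = 1 \<and> N = act k N0"
proof -
  obtain al be be' ga where N: "N = M2 al be be' ga" by (rule M2_cases)
  have h: "be' = be" "al*ga - be*be = -1" using assms N by (auto simp: spacelike_unit_def)
  show ?thesis
  proof (cases "al = 0")
    case False
    define k where "k = M2 1 (-al/2) ((be+1)/al) ((1-be)/2)"
    have "det k = 1" using False by (simp add: k_def field_simps)
    moreover have "act k N0 = N"
    proof -
      have "ga = (be*be - 1)/al" using h(2) False by (simp add: field_simps)
      then show ?thesis using False h(1) by (simp add: k_def act_N0 N field_simps)
    qed
    ultimately show ?thesis by metis
  next
    case True
    then have "be*be = 1" using h by simp
    then have "be = 1 \<or> be = -1" by (metis square_eq_1_iff)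
    then show ?thesis
    proof
      assume b: "be = 1"
      define k where "k = M2 0 (-1) 1 (-ga/2)"
      have "det k = 1" by (simp add: k_def)
      moreover have "act k N0 = N" using True b h(1) by (simp add: k_def act_N0 N)
      ultimately show ?thesis by metis
    next
      assume b: "be = -1"
      define k where "k = M2 1 0 (-ga/2) 1"
      have "det k = 1" by (simp add: k_def)
      moreover have "act k N0 = N" using True b h(1) by (simp add: k_def act_N0 N)
      ultimately show ?thesis by metis
    qed
  qed
qed

lemma SQ_frame:
  assumes k: "det k = 1"
  shows "g \<in> SQ (act k N0) \<longleftrightarrow> conj2 (adj2 k) g \<in> SQ0"
proof -
  have dk: "det (adj2 k) = 1" using k by simp
  have "conj2 k (conj2 (adj2 k) g) = g" using conj2_conj2[OF dk, of g] by simp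
  then show ?thesis using SQ_conj_iff[OF k, of "conj2 (adj2 k) g" N0] SQ_N0 by simp
qed

lemma conj2_add: "conj2 k (X + Y) = conj2 k X + conj2 k Y"
  by (cases k rule: M2_cases, cases X rule: M2_cases, cases Y rule: M2_cases) (simp add: conj2_def algebra_simps)

lemma conj2_scaleR: "conj2 k (r *\<^sub>R X) = r *\<^sub>R conj2 k X"
  by (cases k rule: M2_cases, cases X rule: M2_cases) (simp add: conj2_def algebra_simps)

lemma linear_conj2: "linear (conj2 k)"
  by (rule linearI) (simp_all add: conj2_add conj2_scaleR)

lemma conj2_mat1: "det k = 1 \<Longrightarrow> conj2 k (mat 1) = mat 1"
  by (simp add: conj2_def mult_adj2)

lemma conj2_mult: "det k = 1 \<Longrightarrow> conj2 k (X ** Y) = conj2 k X ** conj2 k Y"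
  by (simp add: conj2_def matrix_mul_assoc adj2_mult')
     (simp add: matrix_mul_assoc[symmetric] adj2_mult')

lemma conj2_0: "conj2 k 0 = 0"
  using conj2_scaleR[of k 0 0] by simp

lemma cont_entry: "continuous_on UNIV (\<lambda>g::real^2^2. g$i$j)"
proof -
  have "bounded_linear (\<lambda>g::real^2^2. g$i$j)"
    using bounded_linear_compose[OF bounded_linear_vec_nth[of j] bounded_linear_vec_nth[of i]]
    by (simp add: o_def)
  then show ?thesis by (rule linear_continuous_on)
qed

definition C0 :: "(real^2^2) set" where
  "C0 = {g. g$1$1 = g$2$2 \<and> 0 \<le> g$1$1 * g$1$2 \<and> 0 \<le> g$1$1 * g$2$1}"

lemma closed_C0: "closed C0"
  unfolding C0_def
  by (intro closed_Collect_conj closed_Collect_eq closed_Collect_le continuous_on_mult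
      cont_entry continuous_on_const)

lemma SQ0_C0: "SQ0 \<subseteq> C0"
proof
  fix g assume g: "g \<in> SQ0"
  have e: "g$1$1 = g$2$2" "\<bar>g$1$1\<bar> > 1" "g$1$1 * g$1$2 > 0" "det g = 1" using g by (auto simp: SQ0_def)
  have "g$1$1 * g$1$1 = 1 + g$1$2 * g$2$1" using e(1,4) by (simp add: det_2)
  moreover have "g$1$1 * g$1$1 > 1"
  proof -
    have "\<bar>g$1$1\<bar> * \<bar>g$1$1\<bar> > 1 * 1" using e(2) by (intro mult_strict_mono) auto
    then show ?thesis by (simp add: abs_mult_self_eq)
  qed
  ultimately have p: "g$1$2 * g$2$1 > 0" by simp
  have "(g$1$1 * g$1$2) * (g$1$2 * g$2$1) > 0" using e(3) p by simp
  then have "0 < (g$1$1 * g$2$1) * (g$1$2 * g$1$2)" by (simp add: ac_simps)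
  moreover have "g$1$2 * g$1$2 > 0" using e(3) by (metis mult_zero_right not_real_square_gt_zero order_less_irrefl)
  ultimately have "g$1$1 * g$2$1 > 0" using zero_less_mult_pos2 by blast
  then show "g \<in> C0" using e by (simp add: C0_def)
qed

lemma bdry_ray_frame:
  assumes k: "det k = 1" and b: "bdry_ray (act k N0) X"
  shows "(\<exists>be>0. conj2 (adj2 k) X = M2 0 be 0 0) \<or> (\<exists>ga>0. conj2 (adj2 k) X = M2 0 0 ga 0)"
proof -
  define T where "T = (conj2 (adj2 k)) -` C0"
  have bl: "bounded_linear (conj2 (adj2 k))" using linear_conj2 linear_conv_bounded_linear by blast
  have "closed T" unfolding T_def
    by (rule continuous_closed_vimage[OF closed_C0]) (rule linear_continuous_at[OF bl])
  moreover have "SQ (act k N0) \<subseteq> T" using SQ_frame[OF k] SQ0_C0 by (auto simp: T_def)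
  ultimately have cl: "closure (SQ (act k N0)) \<subseteq> T" by (rule closure_minimal[rotated])
  have X: "X \<noteq> 0" "X ** X = 0" and P: "\<forall>t>0. par_curve X t \<in> closure (SQ (act k N0))"
    using b unfolding bdry_ray_def by blast+
  define Y where "Y = conj2 (adj2 k) X"
  have dk: "det (adj2 k) = 1" using k by simp
  have "par_curve X 1 \<in> T" using P cl by auto
  then have "conj2 (adj2 k) (mat 1 + X) \<in> C0" by (simp add: T_def par_curve_def)
  then have C: "mat 1 + Y \<in> C0" by (simp add: Y_def conj2_add conj2_mat1[OF dk])
  have YY: "Y ** Y = 0" using X(2) by (simp add: Y_def conj2_mult[OF dk, symmetric] conj2_0)
  have Y0: "Y \<noteq> 0"
  proof
    assume "Y = 0"
    then have "conj2 k Y = 0" by (simp add: conj2_0)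
    moreover have "conj2 k Y = X" using conj2_conj2[OF dk, of X] by (simp add: Y_def)
    ultimately show False using X(1) by simp
  qed
  obtain y1 y2 y3 y4 where Ye: "Y = M2 y1 y2 y3 y4" by (rule M2_cases)
  have c: "y1 = y4" "0 \<le> (1+y1)*y2" "0 \<le> (1+y1)*y3" using C by (auto simp: Ye M2_mat1 C0_def)
  have yy: "y1*y1 + y2*y3 = 0" "y1*y2 + y2*y4 = 0" "y3*y1 + y4*y3 = 0"
    using YY by (simp_all add: Ye M2_zero)
  have y10: "y1 = 0"
  proof (rule ccontr)
    assume "y1 \<noteq> 0"
    then have "y2 = 0" "y3 = 0" using yy(2,3) c(1) by (auto simp: algebra_simps)
    then show False using yy(1) \<open>y1 \<noteq> 0\<close> by simp
  qed
  then have "y2*y3 = 0" "y4 = 0" "0 \<le> y2" "0 \<le> y3" using yy(1) c by auto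
  moreover have "\<not> (y2 = 0 \<and> y3 = 0)" using Y0 y10 \<open>y4 = 0\<close> by (auto simp: Ye M2_zero)
  ultimately have "(y2 > 0 \<and> y3 = 0) \<or> (y3 > 0 \<and> y2 = 0)" by auto
  then show ?thesis using y10 \<open>y4 = 0\<close> by (auto simp: Y_def[symmetric] Ye)
qed

lemma ray_set_scale: "c > 0 \<Longrightarrow> ray_set (c *\<^sub>R X) = ray_set X"
  unfolding ray_set_def par_curve_def
proof (safe)
  fix t :: real assume "c > 0" "t > 0"
  then show "\<exists>t'. mat 1 + t *\<^sub>R c *\<^sub>R X = mat 1 + t' *\<^sub>R X \<and> t' > 0"
    by (intro exI[of _ "t*c"]) auto
next
  fix t :: real assume "c > 0" "t > 0"
  then show "\<exists>t'. mat 1 + t *\<^sub>R X = mat 1 + t' *\<^sub>R c *\<^sub>R X \<and> t' > 0"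
    by (intro exI[of _ "t/c"]) auto
qed


lemma L1:
  fixes P U C :: real
  assumes "\<forall>r>0. P*r + U/r \<le> C"
  shows "P \<le> 0"
proof (rule ccontr)
  assume "\<not> P \<le> 0"
  then have P: "P > 0" by simp
  define r where "r = (\<bar>C\<bar> + \<bar>U\<bar> + 1)/P + 1"
  have s1: "r \<ge> 1" using P by (simp add: r_def)
  then have s0: "r > 0" by simp
  have "P*r = \<bar>C\<bar> + \<bar>U\<bar> + 1 + P" using P by (simp add: r_def field_simps)
  moreover have "U/r \<ge> - \<bar>U\<bar>"
  proof -
    have "\<bar>U/r\<bar> = \<bar>U\<bar>/r" using s0 by simp
    also have "\<dots> \<le> \<bar>U\<bar>" using s1 by (simp add: divide_le_eq mult_le_cancel_left1)
    finally show ?thesis by linarith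
  qed
  ultimately have "P*r + U/r > C" using P by linarith
  then show False using assms s0 by fastforce
qed

lemma L2:
  fixes P U C :: real
  assumes "\<forall>t>0. P*(t*t) + U/(t*t) \<le> C"
  shows "P \<le> 0"
proof (rule L1[of P U C], intro allI impI)
  fix r :: real assume r: "r > 0"
  then have "sqrt r > 0" "sqrt r * sqrt r = r" by simp_all
  then show "P*r + U/r \<le> C" using assms by metis
qed

lemma lin_inv_pos:
  fixes A B :: real
  assumes "\<forall>y>0. 0 < A*y + B/y"
  shows "0 \<le> A" "0 \<le> B"
proof -
  have "\<forall>r>0. (-A)*r + (-B)/r \<le> 0" using assms by (auto simp: algebra_simps)
  from L1[OF this] show "0 \<le> A" by simp
  have "\<forall>r>0. (-B)*r + (-A)/r \<le> 0"
  proof (intro allI impI)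
    fix r :: real assume r: "r > 0"
    then have "0 < A*(1/r) + B/(1/r)" using assms[rule_format, of "1/r"] by simp
    then show "(-B)*r + (-A)/r \<le> 0" by (simp add: field_simps)
  qed
  from L1[OF this] show "0 \<le> B" by simp
qed

lemma lin_inv_neg:
  fixes A B :: real
  assumes "\<forall>y>0. A*y + B/y < 0"
  shows "A \<le> 0" "B \<le> 0"
proof -
  have "\<forall>y>0. 0 < (-A)*y + (-B)/y" using assms by (auto simp: algebra_simps)
  from lin_inv_pos[OF this] show "A \<le> 0" "B \<le> 0" by auto
qed

lemma corner:
  fixes P Q R U C :: real
  assumes H: "\<forall>y>0. \<forall>z>0. P*(y*z) + Q*(y/z) + R*(z/y) + U/(y*z) \<le> C"
  shows "P \<le> 0" "Q \<le> 0" "R \<le> 0" "U \<le> 0"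
proof -
  have "\<forall>t>0. P*(t*t) + U/(t*t) \<le> C - Q - R"
  proof (intro allI impI)
    fix t :: real assume t: "t > 0"
    then show "P*(t*t) + U/(t*t) \<le> C - Q - R" using H[rule_format, of t t] t by simp
  qed
  then show "P \<le> 0" by (rule L2)
  have "\<forall>t>0. Q*(t*t) + R/(t*t) \<le> C - P - U"
  proof (intro allI impI)
    fix t :: real assume t: "t > 0"
    then show "Q*(t*t) + R/(t*t) \<le> C - P - U" using H[rule_format, of t "1/t"] t
      by (simp add: field_simps)
  qed
  then show "Q \<le> 0" by (rule L2)
  have "\<forall>t>0. R*(t*t) + Q/(t*t) \<le> C - P - U"
  proof (intro allI impI)
    fix t :: real assume t: "t > 0"
    then show "R*(t*t) + Q/(t*t) \<le> C - P - U" using H[rule_format, of "1/t" t] t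
      by (simp add: field_simps)
  qed
  then show "R \<le> 0" by (rule L2)
  have "\<forall>t>0. U*(t*t) + P/(t*t) \<le> C - Q - R"
  proof (intro allI impI)
    fix t :: real assume t: "t > 0"
    then show "U*(t*t) + P/(t*t) \<le> C - Q - R" using H[rule_format, of "1/t" "1/t"] t
      by (simp add: field_simps)
  qed
  then show "U \<le> 0" by (rule L2)
qed

lemma arc_ineq:
  fixes m1 m2 sg :: real
  assumes m: "m1 \<ge> 1" "m2 \<ge> 1" and d: "arcosh m1 - arcosh m2 \<le> sg"
  shows "2*m1 - 1 \<le> 2 * exp sg * m2"
proof -
  define a1 where "a1 = m1 + sqrt (m1^2 - 1)"
  define a2 where "a2 = m2 + sqrt (m2^2 - 1)"
  have s1: "sqrt (m1^2 - 1) \<ge> m1 - 1"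
    by (rule real_le_rsqrt) (use m in \<open>simp add: power2_eq_square algebra_simps\<close>)
  have s2: "sqrt (m2^2 - 1) \<le> m2"
    by (rule real_le_lsqrt) (use m in auto)
  have a1p: "a1 > 0" using s1 m by (simp add: a1_def)
  have "1 \<le> m2^2" using m(2) by (simp add: one_le_power)
  then have sq0: "sqrt (m2^2 - 1) \<ge> 0" by simp
  have a2p: "a2 > 0" unfolding a2_def using sq0 m(2) by linarith
  have "ln a1 \<le> ln a2 + sg" using d m by (simp add: arcosh_real_def a1_def a2_def)
  then have "exp (ln a1) \<le> exp (ln a2 + sg)" by simp
  then have f1: "a1 \<le> a2 * exp sg" using a1p a2p by (simp add: exp_add)
  have "a2 \<le> 2*m2" using s2 by (simp add: a2_def)
  then have f2: "a2 * exp sg \<le> (2*m2) * exp sg" by (rule mult_right_mono) simp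
  have e2: "(2*m2) * exp sg = 2 * exp sg * m2" by simp
  have f3: "2*m1 - 1 \<le> a1" using s1 by (simp add: a1_def)
  show ?thesis using order.trans[OF f3 order.trans[OF f1 f2]] unfolding e2 .
qed


definition Dg :: "real \<Rightarrow> real^2^2" where "Dg y = M2 y 0 0 (1/y)"

lemma Dg_geod: "y > 0 \<Longrightarrow> Dg y \<in> geod N0"
  by (simp add: Dg_def geod_def hyp_plane_M2 N0_def)

lemma frame_mink: "det k1 = 1 \<Longrightarrow> mink (act k1 X) (act k2 Y) = mink X (act (adj2 k1 ** k2) Y)"
  using mink_act[of "adj2 k1" "act k1 X" "act k2 Y"] by (simp add: act_act adj2_mult')

lemma mink_Dg_act: "y > 0 \<Longrightarrow> z > 0 \<Longrightarrow>
  2 * mink (Dg y) (act (M2 p q r w) (Dg z)) = (r*r)*(y*z) + (w*w)*(y/z) + (p*p)*(z/y) + (q*q)/(y*z)"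
  by (simp add: Dg_def field_simps)

lemma geod_act_mem: "det k = 1 \<Longrightarrow> X \<in> geod M \<Longrightarrow> act k X \<in> geod (act k M)"
  by (simp add: geod_act)

lemma away_signs:
  assumes k1: "det k1 = 1" and k2: "det k2 = 1"
    and dc: "disjoint_closures (act k1 N0) (act k2 N0)" and oa: "oriented_away (act k1 N0) (act k2 N0)"
    and K: "K = adj2 k1 ** k2"
  shows "K$2$1*K$2$2 > 0" "K$1$1*K$1$2 > 0" "K$1$1*K$2$1 < 0" "K$1$2*K$2$2 < 0"
proof -
  obtain a b c d where Ke: "K = M2 a b c d" by (rule M2_cases)
  have KK: "adj2 k1 ** k2 = M2 a b c d" using K Ke by simp
  have P1: "\<forall>y>0. (a*c)*y + (b*d)/y < 0"
  proof (intro allI impI)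
    fix y :: real assume y: "y > 0"
    have "act k2 (Dg y) \<in> geod (act k2 N0)" using geod_act_mem[OF k2 Dg_geod[OF y]] .
    then have "mink (act k2 (Dg y)) (act k1 N0) < 0" using oa by (simp add: oriented_away_def)
    moreover have "mink (act k2 (Dg y)) (act k1 N0) = mink N0 (act K (Dg y))"
      using frame_mink[OF k1, of N0 k2 "Dg y"] mink_sym K by metis
    moreover have "mink N0 (act K (Dg y)) = (a*c)*y + (b*d)/y"
      by (simp add: Ke Dg_def N0_def field_simps)
    ultimately show "(a*c)*y + (b*d)/y < 0" by simp
  qed
  have P2: "\<forall>y>0. 0 < (c*d)*y + (a*b)/y"
  proof (intro allI impI)
    fix y :: real assume y: "y > 0"
    have "act k1 (Dg y) \<in> geod (act k1 N0)" using geod_act_mem[OF k1 Dg_geod[OF y]] .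
    then have "mink (act k1 (Dg y)) (act k2 N0) < 0" using oa by (simp add: oriented_away_def)
    moreover have "mink (act k1 (Dg y)) (act k2 N0) = mink (Dg y) (act K N0)"
      using frame_mink[OF k1] K by simp
    moreover have "mink (Dg y) (act K N0) = - ((c*d)*y + (a*b)/y)"
      by (simp add: Ke Dg_def act_N0 field_simps)
    ultimately show "0 < (c*d)*y + (a*b)/y" by simp
  qed
  obtain p q r w where k1e: "k1 = M2 p q r w" by (rule M2_cases)
  have dk1: "p*w - q*r = 1" using k1 k1e by simp
  have ideal: "ideal_pt (act k1 V) \<and> mink (act k1 V) (act k1 N0) = 0"
    if "V = M2 1 0 0 0 \<or> V = M2 0 0 0 1" for V
  proof -
    have "mink V N0 = 0" using that by (auto simp: N0_def)
    then have m0: "mink (act k1 V) (act k1 N0) = 0" using mink_act[OF k1] by simp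
    have s: "sym2 (act k1 V)" using that by (intro sym2_act) auto
    have dV: "det (act k1 V) = 0" using that by (auto simp: det_act)
    have tr: "(act k1 V)$1$1 + (act k1 V)$2$2 > 0"
    proof (cases "V = M2 1 0 0 0")
      case True
      have "p \<noteq> 0 \<or> r \<noteq> 0" using dk1 by auto
      then have "p*p + r*r > 0" by (metis add_pos_nonneg add_nonneg_pos not_real_square_gt_zero zero_le_square)
      then show ?thesis using True by (simp add: k1e)
    next
      case False
      then have V: "V = M2 0 0 0 1" using that by blast
      have "q \<noteq> 0 \<or> w \<noteq> 0" using dk1 by auto
      then have "q*q + w*w > 0" by (metis add_pos_nonneg add_nonneg_pos not_real_square_gt_zero zero_le_square)
      then show ?thesis using V by (simp add: k1e)
    qed
    have "act k1 V \<noteq> 0" using tr by auto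
    then show ?thesis using s dV tr m0 by (simp add: ideal_pt_def)
  qed
  have nz1: "c*d \<noteq> 0"
  proof -
    have "mink (act k1 (M2 1 0 0 0)) (act k2 N0) \<noteq> 0"
      using dc ideal[of "M2 1 0 0 0"] unfolding disjoint_closures_def by blast
    moreover have "mink (act k1 (M2 1 0 0 0)) (act k2 N0) = - (c*d)"
      using frame_mink[OF k1, of "M2 1 0 0 0" k2 N0] KK by (simp add: act_N0)
    ultimately show ?thesis by simp
  qed
  have nz2: "a*b \<noteq> 0"
  proof -
    have "mink (act k1 (M2 0 0 0 1)) (act k2 N0) \<noteq> 0"
      using dc ideal[of "M2 0 0 0 1"] unfolding disjoint_closures_def by blast
    moreover have "mink (act k1 (M2 0 0 0 1)) (act k2 N0) = - (a*b)"
      using frame_mink[OF k1, of "M2 0 0 0 1" k2 N0] KK by (simp add: act_N0)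
    ultimately show ?thesis by simp
  qed
  have g1: "c*d \<ge> 0" "a*b \<ge> 0" using lin_inv_pos[OF P2] by auto
  have r1: "c*d > 0" "a*b > 0"
    using order_le_neq_trans[OF g1(1) nz1[symmetric]] order_le_neq_trans[OF g1(2) nz2[symmetric]] by auto
  have g2: "a*c \<le> 0" "b*d \<le> 0" using lin_inv_neg[OF P1] by auto
  have n3: "a*c \<noteq> 0" "b*d \<noteq> 0" using nz1 nz2 by auto
  have r2: "a*c < 0" "b*d < 0"
    using order_le_neq_trans[OF g2(1) n3(1)] order_le_neq_trans[OF g2(2) n3(2)] by auto
  show "K$2$1*K$2$2 > 0" "K$1$1*K$1$2 > 0" "K$1$1*K$2$1 < 0" "K$1$2*K$2$2 < 0"
    using r1 r2 by (simp_all add: Ke)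
qed


lemma geod_hyp: "X \<in> geod M \<Longrightarrow> X \<in> hyp_plane"
  by (simp add: geod_def)

lemma sup_B:
  assumes k1: "det k1 = 1" and k2: "det k2 = 1" and hd: "det h = 1"
    and bdd: "bdd_above {hdist x (act h x') - hdist x x' | x x'. x \<in> geod (act k1 N0) \<and> x' \<in> geod (act k2 N0)}"
    and sup: "Sup {hdist x (act h x') - hdist x x' | x x'. x \<in> geod (act k1 N0) \<and> x' \<in> geod (act k2 N0)} < 0"
    and H: "adj2 k1 ** (h ** k2) = M2 p q r w" and K: "adj2 k1 ** k2 = M2 a b c d"
    and nz: "a \<noteq> 0" "b \<noteq> 0" "c \<noteq> 0" "d \<noteq> 0"
  shows "p^2 < a^2" "q^2 < b^2" "r^2 < c^2" "w^2 < d^2"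
proof -
  define Ss where "Ss = {hdist x (act h x') - hdist x x' | x x'. x \<in> geod (act k1 N0) \<and> x' \<in> geod (act k2 N0)}"
  define sg where "sg = Sup Ss"
  define e where "e = exp sg"
  have e1: "e < 1" using sup by (simp add: e_def sg_def Ss_def)
  have e0: "e > 0" by (simp add: e_def)
  have ineq: "\<forall>y>0. \<forall>z>0. (r*r - e*(c*c))*(y*z) + (w*w - e*(d*d))*(y/z) + (p*p - e*(a*a))*(z/y)
      + (q*q - e*(b*b))/(y*z) \<le> 1"
  proof (intro allI impI)
    fix y z :: real assume y: "y > 0" and z: "z > 0"
    define x where "x = act k1 (Dg y)"
    define x' where "x' = act k2 (Dg z)"
    have xg: "x \<in> geod (act k1 N0)" using geod_act_mem[OF k1 Dg_geod[OF y]] by (simp add: x_def)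
    have xg': "x' \<in> geod (act k2 N0)" using geod_act_mem[OF k2 Dg_geod[OF z]] by (simp add: x'_def)
    have mem: "hdist x (act h x') - hdist x x' \<in> Ss" unfolding Ss_def using xg xg' by blast
    have le: "hdist x (act h x') - hdist x x' \<le> sg"
      unfolding sg_def using cSup_upper[OF mem] bdd by (simp add: Ss_def)
    define m1 where "m1 = mink x (act h x')"
    define m2 where "m2 = mink x x'"
    have xh: "x \<in> hyp_plane" "x' \<in> hyp_plane" using xg xg' geod_hyp by auto
    have m11: "m1 \<ge> 1" unfolding m1_def by (rule mink_hyp_ge1[OF xh(1) hyp_act[OF xh(2) hd]])
    have m21: "m2 \<ge> 1" unfolding m2_def by (rule mink_hyp_ge1[OF xh(1) xh(2)])
    have "arcosh m1 - arcosh m2 \<le> sg" using le by (simp add: hdist_def m1_def m2_def)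
    from arc_ineq[OF m11 m21 this] have A: "2*m1 - 1 \<le> 2 * e * m2" by (simp add: e_def)
    have "m1 = mink (Dg y) (act (adj2 k1 ** (h ** k2)) (Dg z))"
      unfolding m1_def x_def x'_def act_act using frame_mink[OF k1] by simp
    then have em1: "2*m1 = (r*r)*(y*z) + (w*w)*(y/z) + (p*p)*(z/y) + (q*q)/(y*z)"
      using mink_Dg_act[OF y z] H by simp
    have "m2 = mink (Dg y) (act (adj2 k1 ** k2) (Dg z))"
      unfolding m2_def x_def x'_def using frame_mink[OF k1] by simp
    then have em2: "2*m2 = (c*c)*(y*z) + (d*d)*(y/z) + (a*a)*(z/y) + (b*b)/(y*z)"
      using mink_Dg_act[OF y z] K by simp
    have "(r*r - e*(c*c))*(y*z) + (w*w - e*(d*d))*(y/z) + (p*p - e*(a*a))*(z/y)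
      + (q*q - e*(b*b))/(y*z) = 2*m1 - e*(2*m2)"
      unfolding em1 em2 by (simp add: algebra_simps diff_divide_distrib)
    also have "\<dots> \<le> 1" using A by (simp add: algebra_simps)
    finally show "(r*r - e*(c*c))*(y*z) + (w*w - e*(d*d))*(y/z) + (p*p - e*(a*a))*(z/y)
      + (q*q - e*(b*b))/(y*z) \<le> 1" .
  qed
  note cr = corner[OF ineq]
  have lt: "nn * nn < mm * mm" if "nn * nn - e*(mm * mm) \<le> 0" "mm \<noteq> 0" for nn mm :: real
  proof -
    have "mm * mm > 0" using that(2) not_real_square_gt_zero by blast
    then have "e*(mm * mm) < 1*(mm * mm)" using e1 by (intro mult_strict_right_mono) auto
    then show ?thesis using that(1) by simp
  qed
  show "p^2 < a^2" using lt[OF cr(3) nz(1)] by (simp add: power2_eq_square)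
  show "q^2 < b^2" using lt[OF cr(4) nz(2)] by (simp add: power2_eq_square)
  show "r^2 < c^2" using lt[OF cr(1) nz(3)] by (simp add: power2_eq_square)
  show "w^2 < d^2" using lt[OF cr(2) nz(4)] by (simp add: power2_eq_square)
qed


lemma mult_adj2_left: "det k = 1 \<Longrightarrow> k ** (adj2 k ** X) = X"
  by (simp add: matrix_mul_assoc mult_adj2)

lemma adj2_mult_left: "det k = 1 \<Longrightarrow> adj2 k ** (k ** X) = X"
  by (simp add: matrix_mul_assoc adj2_mult')

lemma par_curve_conj: "det k = 1 \<Longrightarrow> par_curve (conj2 k Y) t = conj2 k (par_curve Y t)"
  by (simp add: par_curve_def conj2_add conj2_scaleR conj2_mat1)

lemma nilp_det: assumes "X ** X = 0" shows "det (par_curve X t) = 1"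
proof -
  obtain x y z u where X: "X = M2 x y z u" by (rule M2_cases)
  have e: "x*x + y*z = 0" "x*y + y*u = 0" "z*x + u*z = 0" "z*y + u*u = 0"
    using assms by (simp_all add: X M2_zero)
  have xu: "x + u = 0"
  proof (rule ccontr)
    assume n: "x + u \<noteq> 0"
    have "y*(x+u) = 0" "z*(x+u) = 0" using e by (simp_all add: algebra_simps)
    then have "y = 0" "z = 0" using n by auto
    then have "x = 0" "u = 0" using e by auto
    then show False using n by simp
  qed
  then have "u = -x" by simp
  then have "x*u - y*z = 0" using e(1) by simp
  moreover have "det (par_curve X t) = 1 + t*(x+u) + t*t*(x*u - y*z)"
    by (simp add: X par_curve_M2 algebra_simps)
  ultimately show ?thesis using xu by simp
qed

lemma transfer1:
  assumes k1: "det k1 = 1" and k2: "det k2 = 1"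
  shows "meets_transv (\<lambda>t. h ** par_curve X t) (SQ (act k1 N0)) \<longleftrightarrow>
    meets_transv (\<lambda>t. (adj2 k1 ** (h ** k2)) ** par_curve (conj2 (adj2 k2) X) t ** adj2 (adj2 k1 ** k2)) SQ0"
proof -
  define L where "L = conj2 (adj2 k1)"
  define Li where "Li = conj2 k1"
  have dk1: "det (adj2 k1) = 1" using k1 by simp
  have dk2: "det (adj2 k2) = 1" using k2 by simp
  have lin: "linear L" "linear Li" unfolding L_def Li_def by (rule linear_conj2)+
  have inv1: "Li (L x) = x" for x using conj2_conj2[OF dk1, of x] by (simp add: L_def Li_def)
  have inv2: "L (Li y) = y" for y using conj2_conj2[OF k1, of y] by (simp add: L_def Li_def)
  have img: "L ` SQ (act k1 N0) = SQ0"
  proof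
    show "L ` SQ (act k1 N0) \<subseteq> SQ0" using SQ_frame[OF k1] by (auto simp: L_def)
    show "SQ0 \<subseteq> L ` SQ (act k1 N0)"
    proof
      fix y assume "y \<in> SQ0"
      then have "Li y \<in> SQ (act k1 N0)" using SQ_frame[OF k1, of "Li y"] inv2 by (simp add: L_def)
      then show "y \<in> L ` SQ (act k1 N0)" using inv2[of y] by force
    qed
  qed
  have Xe: "X = conj2 k2 (conj2 (adj2 k2) X)" using conj2_conj2[OF dk2, of X] by simp
  have cur: "L (h ** par_curve X t) =
     (adj2 k1 ** (h ** k2)) ** par_curve (conj2 (adj2 k2) X) t ** adj2 (adj2 k1 ** k2)" for t
  proof -
    have "par_curve X t = conj2 k2 (par_curve (conj2 (adj2 k2) X) t)"
      by (subst Xe) (rule par_curve_conj[OF k2])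
    then show ?thesis
      by (simp add: L_def conj2_def adj2_mult matrix_mul_assoc)
  qed
  show ?thesis
    using meets_transv_lin[OF lin inv1 inv2, of "\<lambda>t. h ** par_curve X t" "SQ (act k1 N0)"]
    unfolding img cur by simp
qed

lemma SQ_SL2: "SQ N \<subseteq> SL2" by (auto simp: SQ_def)

lemma transfer2:
  assumes k1: "det k1 = 1" and k2: "det k2 = 1" and XX: "X ** X = 0"
  shows "meets_transv (\<lambda>t. matrix_inv (par_curve X t) ** h) (matrix_inv ` SQ (act k2 N0)) \<longleftrightarrow>
    meets_transv (\<lambda>t. adj2 (adj2 k1 ** (h ** k2)) ** par_curve (conj2 (adj2 k1) X) t ** adj2 (adj2 (adj2 k1 ** k2))) SQ0"
proof -
  define L where "L = (\<lambda>g. conj2 (adj2 k2) (adj2 g))"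
  define Li where "Li = (\<lambda>g. adj2 (conj2 k2 g))"
  have dk1: "det (adj2 k1) = 1" using k1 by simp
  have dk2: "det (adj2 k2) = 1" using k2 by simp
  have lin: "linear L" "linear Li" unfolding L_def Li_def
    using linear_compose[OF linear_adj2 linear_conj2] linear_compose[OF linear_conj2 linear_adj2]
    by (simp_all add: o_def)
  have inv1: "Li (L x) = x" for x using conj2_conj2[OF dk2, of "adj2 x"] by (simp add: L_def Li_def)
  have inv2: "L (Li y) = y" for y using conj2_conj2[OF k2, of y] by (simp add: L_def Li_def)
  have mi: "matrix_inv ` SQ (act k2 N0) = adj2 ` SQ (act k2 N0)"
    using SQ_SL2 by (force simp: SL2_def matrix_inv_SL2 intro!: image_cong)
  have img: "L ` (matrix_inv ` SQ (act k2 N0)) = SQ0"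
  proof -
    have "L ` (adj2 ` SQ (act k2 N0)) = conj2 (adj2 k2) ` SQ (act k2 N0)"
      by (simp add: image_image L_def)
    also have "\<dots> = SQ0"
    proof
      show "conj2 (adj2 k2) ` SQ (act k2 N0) \<subseteq> SQ0" using SQ_frame[OF k2] by auto
      show "SQ0 \<subseteq> conj2 (adj2 k2) ` SQ (act k2 N0)"
      proof
        fix y assume "y \<in> SQ0"
        moreover have "conj2 (adj2 k2) (conj2 k2 y) = y" using conj2_conj2[OF k2] by simp
        ultimately have "conj2 k2 y \<in> SQ (act k2 N0)" using SQ_frame[OF k2, of "conj2 k2 y"] by simp
        then show "y \<in> conj2 (adj2 k2) ` SQ (act k2 N0)" using \<open>conj2 (adj2 k2) (conj2 k2 y) = y\<close> by force
      qed
    qed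
    finally show ?thesis using mi by simp
  qed
  have Xe: "X = conj2 k1 (conj2 (adj2 k1) X)" using conj2_conj2[OF dk1, of X] by simp
  have cur: "L (matrix_inv (par_curve X t) ** h) =
     adj2 (adj2 k1 ** (h ** k2)) ** par_curve (conj2 (adj2 k1) X) t ** adj2 (adj2 (adj2 k1 ** k2))" for t
  proof -
    have pc: "par_curve X t = conj2 k1 (par_curve (conj2 (adj2 k1) X) t)"
      by (subst Xe) (rule par_curve_conj[OF k1])
    have "matrix_inv (par_curve X t) = adj2 (par_curve X t)"
      using nilp_det[OF XX] matrix_inv_SL2 by blast
    then show ?thesis
      by (simp add: L_def pc conj2_def adj2_mult matrix_mul_assoc)
  qed
  show ?thesis
    using meets_transv_lin[OF lin inv1 inv2, of "\<lambda>t. matrix_inv (par_curve X t) ** h" "matrix_inv ` SQ (act k2 N0)"]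
    unfolding img cur by simp
qed


lemma exactly_one3_swap: "exactly_one3 A B C \<Longrightarrow> exactly_one3 A C B"
  by (auto simp: exactly_one3_def)

lemma hin1:
  assumes k1: "det k1 = 1" and k2: "det k2 = 1"
  shows "h \<in> SQ (act k1 N0) \<longleftrightarrow> (adj2 k1 ** (h ** k2)) ** adj2 (adj2 k1 ** k2) \<in> SQ0"
proof -
  have "(adj2 k1 ** (h ** k2)) ** adj2 (adj2 k1 ** k2) = conj2 (adj2 k1) h"
    using k2 by (simp add: conj2_def adj2_mult matrix_mul_assoc[symmetric] mult_adj2_left)
  then show ?thesis using SQ_frame[OF k1] by simp
qed

lemma hin2:
  assumes k1: "det k1 = 1" and k2: "det k2 = 1" and hd: "det h = 1"
  shows "h \<in> matrix_inv ` SQ (act k2 N0) \<longleftrightarrow>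
    adj2 (adj2 k1 ** (h ** k2)) ** adj2 (adj2 (adj2 k1 ** k2)) \<in> SQ0"
proof -
  have "h \<in> matrix_inv ` SQ (act k2 N0) \<longleftrightarrow> adj2 h \<in> SQ (act k2 N0)"
  proof
    assume "h \<in> matrix_inv ` SQ (act k2 N0)"
    then obtain g where g: "g \<in> SQ (act k2 N0)" "h = matrix_inv g" by blast
    have "det g = 1" using g(1) SQ_SL2 by (auto simp: SL2_def)
    then have "h = adj2 g" using g(2) by (simp add: matrix_inv_SL2)
    then show "adj2 h \<in> SQ (act k2 N0)" using g by simp
  next
    assume a: "adj2 h \<in> SQ (act k2 N0)"
    then have "matrix_inv (adj2 h) = h" using hd by (simp add: matrix_inv_SL2)
    then show "h \<in> matrix_inv ` SQ (act k2 N0)" using a by force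
  qed
  moreover have "adj2 (adj2 k1 ** (h ** k2)) ** adj2 (adj2 (adj2 k1 ** k2)) = conj2 (adj2 k2) (adj2 h)"
    using k1 by (simp add: conj2_def adj2_mult matrix_mul_assoc[symmetric] mult_adj2_left)
  ultimately show ?thesis using SQ_frame[OF k2] by simp
qed

lemma same_type:
  assumes k: "det k = 1" and "conj2 (adj2 k) X1 = c1 *\<^sub>R E" "conj2 (adj2 k) X2 = c2 *\<^sub>R E"
    and "c1 > 0" "c2 > 0"
  shows "ray_set X1 = ray_set X2"
proof -
  have dk: "det (adj2 k) = 1" using k by simp
  have "X1 = conj2 k (c1 *\<^sub>R E)" "X2 = conj2 k (c2 *\<^sub>R E)"
    using conj2_conj2[OF dk, of X1] conj2_conj2[OF dk, of X2] assms(2,3) by simp_all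
  then have "X1 = (c1/c2) *\<^sub>R X2" using assms(5) by (simp add: conj2_scaleR)
  then show ?thesis using ray_set_scale[of "c1/c2" X2] assms(4,5) by simp
qed

lemma E12: "M2 0 be 0 0 = be *\<^sub>R M2 0 1 0 0" by simp
lemma E21: "M2 0 0 ga 0 = ga *\<^sub>R M2 0 0 1 0" by simp

lemma two_types:
  assumes k: "det k = 1"
    and tp: "(\<exists>be>0. conj2 (adj2 k) Xp = M2 0 be 0 0) \<or> (\<exists>ga>0. conj2 (adj2 k) Xp = M2 0 0 ga 0)"
    and tm: "(\<exists>be>0. conj2 (adj2 k) Xm = M2 0 be 0 0) \<or> (\<exists>ga>0. conj2 (adj2 k) Xm = M2 0 0 ga 0)"
    and ne: "ray_set Xp \<noteq> ray_set Xm"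
  shows "(\<exists>be>0. \<exists>ga>0. conj2 (adj2 k) Xp = M2 0 be 0 0 \<and> conj2 (adj2 k) Xm = M2 0 0 ga 0)
    \<or> (\<exists>be>0. \<exists>ga>0. conj2 (adj2 k) Xm = M2 0 be 0 0 \<and> conj2 (adj2 k) Xp = M2 0 0 ga 0)"
proof -
  have n1: False if "conj2 (adj2 k) Xp = M2 0 b1 0 0" "conj2 (adj2 k) Xm = M2 0 b2 0 0" "b1 > 0" "b2 > 0" for b1 b2
    using same_type[OF k, of Xp b1 "M2 0 1 0 0" Xm b2] that ne by (simp only: E12[of b1] E12[of b2]) blast
  have n2: False if "conj2 (adj2 k) Xp = M2 0 0 b1 0" "conj2 (adj2 k) Xm = M2 0 0 b2 0" "b1 > 0" "b2 > 0" for b1 b2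
    using same_type[OF k, of Xp b1 "M2 0 0 1 0" Xm b2] that ne by (simp only: E21[of b1] E21[of b2]) blast
  show ?thesis using tp tm n1 n2 by blast
qed


theorem mainTheorem16:
  fixes N N' h :: "real^2^2"
  assumes "spacelike_unit N" and "spacelike_unit N'" and "h \<in> SL2"
    and "bdd_above {hdist x (act h x') - hdist x x' | x x'. x \<in> geod N \<and> x' \<in> geod N'}"
    and "Sup {hdist x (act h x') - hdist x x' | x x'. x \<in> geod N \<and> x' \<in> geod N'} < 0"
    and "disjoint_closures N N'" and "oriented_away N N'"
    and "disjoint_closures N (act h N')" and "oriented_away N (act h N')"
  shows "(\<forall>Xp Xm. bdry_ray N' Xp \<and> bdry_ray N' Xm \<and> ray_set Xp \<noteq> ray_set Xm \<longrightarrow>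
            exactly_one3 (h \<in> SQ N)
              (meets_transv (\<lambda>t. h ** par_curve Xp t) (SQ N))
              (meets_transv (\<lambda>t. h ** par_curve Xm t) (SQ N)))
       \<and> (\<forall>Xp Xm. bdry_ray N Xp \<and> bdry_ray N Xm \<and> ray_set Xp \<noteq> ray_set Xm \<longrightarrow>
            exactly_one3 (h \<in> matrix_inv ` SQ N')
              (meets_transv (\<lambda>t. matrix_inv (par_curve Xp t) ** h) (matrix_inv ` SQ N'))
              (meets_transv (\<lambda>t. matrix_inv (par_curve Xm t) ** h) (matrix_inv ` SQ N')))"
proof -
  have hd: "det h = 1" using assms(3) by (simp add: SL2_def)
  obtain k1 where k1: "det k1 = 1" "N = act k1 N0" using exists_frame[OF assms(1)] by blast
  obtain k2 where k2: "det k2 = 1" "N' = act k2 N0" using exists_frame[OF assms(2)] by blast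
  have dhk2: "det (h ** k2) = 1" using hd k2(1) by (simp add: det_mul)
  have hN': "act h N' = act (h ** k2) N0" using k2(2) by (simp add: act_act)
  obtain a b c d where KK: "adj2 k1 ** k2 = M2 a b c d" by (rule M2_cases)
  obtain p q r w where HH: "adj2 k1 ** (h ** k2) = M2 p q r w" by (rule M2_cases)
  have dK: "a*d - b*c = 1"
  proof -
    have "det (adj2 k1 ** k2) = 1" using k1(1) k2(1) by (simp add: det_mul)
    then show ?thesis using KK by simp
  qed
  have dH: "p*w - q*r = 1"
  proof -
    have "det (adj2 k1 ** (h ** k2)) = 1" using k1(1) dhk2 by (simp add: det_mul)
    then show ?thesis using HH by simp
  qed
  have sK: "c*d > 0" "a*b > 0" "a*c < 0" "b*d < 0"
    using away_signs[OF k1(1) k2(1) _ _ refl] assms(6,7) k1(2) k2(2) KK by simp_all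
  have sH: "r*w > 0" "p*q > 0" "p*r < 0" "q*w < 0"
    using away_signs[OF k1(1) dhk2 _ _ refl] assms(8,9) k1(2) hN' HH by simp_all
  have nz: "a \<noteq> 0" "b \<noteq> 0" "c \<noteq> 0" "d \<noteq> 0" using sK by auto
  have B: "p^2 < a^2" "q^2 < b^2" "r^2 < c^2" "w^2 < d^2"
    using sup_B[OF k1(1) k2(1) hd _ _ HH KK nz] assms(4,5) k1(2) k2(2) by simp_all
  have C1: "exactly_one3 (M2 p q r w ** adj2 (M2 a b c d) \<in> SQ0)
     (meets_transv (\<lambda>t. M2 p q r w ** par_curve (M2 0 be 0 0) t ** adj2 (M2 a b c d)) SQ0)
     (meets_transv (\<lambda>t. M2 p q r w ** par_curve (M2 0 0 ga 0) t ** adj2 (M2 a b c d)) SQ0)"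
    if "be > 0" "ga > 0" for be ga
    by (rule core[OF dH dK sK(1) sK(3) sK(4) sH(1) sH(3) sH(4) B(1) B(3) B(2) B(4) that])
  have dH2: "w*p - (-q)*(-r) = 1" using dH by (simp add: algebra_simps)
  have dK2: "d*a - (-b)*(-c) = 1" using dK by (simp add: algebra_simps)
  have C2: "exactly_one3 (M2 w (-q) (-r) p ** adj2 (M2 d (-b) (-c) a) \<in> SQ0)
     (meets_transv (\<lambda>t. M2 w (-q) (-r) p ** par_curve (M2 0 be 0 0) t ** adj2 (M2 d (-b) (-c) a)) SQ0)
     (meets_transv (\<lambda>t. M2 w (-q) (-r) p ** par_curve (M2 0 0 ga 0) t ** adj2 (M2 d (-b) (-c) a)) SQ0)"
    if "be > 0" "ga > 0" for be ga
  proof (rule core[OF dH2 dK2 _ _ _ _ _ _ _ _ _ _ that])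
    show "(-c)*a > 0" using sK(3) by (simp add: mult.commute)
    show "d*(-c) < 0" using sK(1) by (simp add: mult.commute)
    show "(-b)*a < 0" using sK(2) by (simp add: mult.commute)
    show "(-r)*p > 0" using sH(3) by (simp add: mult.commute)
    show "w*(-r) < 0" using sH(1) by (simp add: mult.commute)
    show "(-q)*p < 0" using sH(2) by (simp add: mult.commute)
    show "w^2 < d^2" "(-r)^2 < (-c)^2" "(-q)^2 < (-b)^2" "p^2 < a^2" using B by simp_all
  qed
  have P1: "\<forall>Xp Xm. bdry_ray N' Xp \<and> bdry_ray N' Xm \<and> ray_set Xp \<noteq> ray_set Xm \<longrightarrow>
            exactly_one3 (h \<in> SQ N)
              (meets_transv (\<lambda>t. h ** par_curve Xp t) (SQ N))
              (meets_transv (\<lambda>t. h ** par_curve Xm t) (SQ N))"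
  proof (intro allI impI)
    fix Xp Xm assume A: "bdry_ray N' Xp \<and> bdry_ray N' Xm \<and> ray_set Xp \<noteq> ray_set Xm"
    have tp: "(\<exists>be>0. conj2 (adj2 k2) Xp = M2 0 be 0 0) \<or> (\<exists>ga>0. conj2 (adj2 k2) Xp = M2 0 0 ga 0)"
      using bdry_ray_frame[OF k2(1)] A k2(2) by blast
    have tm: "(\<exists>be>0. conj2 (adj2 k2) Xm = M2 0 be 0 0) \<or> (\<exists>ga>0. conj2 (adj2 k2) Xm = M2 0 0 ga 0)"
      using bdry_ray_frame[OF k2(1)] A k2(2) by blast
    have Hin: "h \<in> SQ N \<longleftrightarrow> M2 p q r w ** adj2 (M2 a b c d) \<in> SQ0"
      using hin1[OF k1(1) k2(1), of h] k1(2) HH KK by simp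
    have Mt: "meets_transv (\<lambda>t. h ** par_curve X t) (SQ N) \<longleftrightarrow>
       meets_transv (\<lambda>t. M2 p q r w ** par_curve (conj2 (adj2 k2) X) t ** adj2 (M2 a b c d)) SQ0" for X
      using transfer1[OF k1(1) k2(1), of h X] k1(2) HH KK by simp
    have TT: "(\<exists>be>0. \<exists>ga>0. conj2 (adj2 k2) Xp = M2 0 be 0 0 \<and> conj2 (adj2 k2) Xm = M2 0 0 ga 0)
      \<or> (\<exists>be>0. \<exists>ga>0. conj2 (adj2 k2) Xm = M2 0 be 0 0 \<and> conj2 (adj2 k2) Xp = M2 0 0 ga 0)"
      using two_types[OF k2(1) tp tm] A by blast
    show "exactly_one3 (h \<in> SQ N)
              (meets_transv (\<lambda>t. h ** par_curve Xp t) (SQ N))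
              (meets_transv (\<lambda>t. h ** par_curve Xm t) (SQ N))"
    proof (cases "\<exists>be>0. \<exists>ga>0. conj2 (adj2 k2) Xp = M2 0 be 0 0 \<and> conj2 (adj2 k2) Xm = M2 0 0 ga 0")
      case True
      then obtain be ga where "be > 0" "ga > 0" "conj2 (adj2 k2) Xp = M2 0 be 0 0" "conj2 (adj2 k2) Xm = M2 0 0 ga 0"
        by blast
      then show ?thesis unfolding Hin Mt using C1 by simp
    next
      case False
      then obtain be ga where "be > 0" "ga > 0" "conj2 (adj2 k2) Xm = M2 0 be 0 0" "conj2 (adj2 k2) Xp = M2 0 0 ga 0"
        using TT by blast
      then show ?thesis unfolding Hin Mt using exactly_one3_swap[OF C1] by simp
    qed
  qed
  have P2: "\<forall>Xp Xm. bdry_ray N Xp \<and> bdry_ray N Xm \<and> ray_set Xp \<noteq> ray_set Xm \<longrightarrow>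
            exactly_one3 (h \<in> matrix_inv ` SQ N')
              (meets_transv (\<lambda>t. matrix_inv (par_curve Xp t) ** h) (matrix_inv ` SQ N'))
              (meets_transv (\<lambda>t. matrix_inv (par_curve Xm t) ** h) (matrix_inv ` SQ N'))"
  proof (intro allI impI)
    fix Xp Xm assume A: "bdry_ray N Xp \<and> bdry_ray N Xm \<and> ray_set Xp \<noteq> ray_set Xm"
    have tp: "(\<exists>be>0. conj2 (adj2 k1) Xp = M2 0 be 0 0) \<or> (\<exists>ga>0. conj2 (adj2 k1) Xp = M2 0 0 ga 0)"
      using bdry_ray_frame[OF k1(1)] A k1(2) by blast
    have tm: "(\<exists>be>0. conj2 (adj2 k1) Xm = M2 0 be 0 0) \<or> (\<exists>ga>0. conj2 (adj2 k1) Xm = M2 0 0 ga 0)"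
      using bdry_ray_frame[OF k1(1)] A k1(2) by blast
    have nil: "Xp ** Xp = 0" "Xm ** Xm = 0" using A by (simp_all add: bdry_ray_def)
    have Hin: "h \<in> matrix_inv ` SQ N' \<longleftrightarrow> M2 w (-q) (-r) p ** adj2 (M2 d (-b) (-c) a) \<in> SQ0"
      using hin2[OF k1(1) k2(1) hd] k2(2) HH KK by simp
    have Mt: "meets_transv (\<lambda>t. matrix_inv (par_curve X t) ** h) (matrix_inv ` SQ N') \<longleftrightarrow>
       meets_transv (\<lambda>t. M2 w (-q) (-r) p ** par_curve (conj2 (adj2 k1) X) t ** adj2 (M2 d (-b) (-c) a)) SQ0"
      if "X ** X = 0" for X
      using transfer2[OF k1(1) k2(1) that, of h] k2(2) HH KK by simp
    have TT: "(\<exists>be>0. \<exists>ga>0. conj2 (adj2 k1) Xp = M2 0 be 0 0 \<and> conj2 (adj2 k1) Xm = M2 0 0 ga 0)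
      \<or> (\<exists>be>0. \<exists>ga>0. conj2 (adj2 k1) Xm = M2 0 be 0 0 \<and> conj2 (adj2 k1) Xp = M2 0 0 ga 0)"
      using two_types[OF k1(1) tp tm] A by blast
    show "exactly_one3 (h \<in> matrix_inv ` SQ N')
              (meets_transv (\<lambda>t. matrix_inv (par_curve Xp t) ** h) (matrix_inv ` SQ N'))
              (meets_transv (\<lambda>t. matrix_inv (par_curve Xm t) ** h) (matrix_inv ` SQ N'))"
    proof (cases "\<exists>be>0. \<exists>ga>0. conj2 (adj2 k1) Xp = M2 0 be 0 0 \<and> conj2 (adj2 k1) Xm = M2 0 0 ga 0")
      case True
      then obtain be ga where "be > 0" "ga > 0" "conj2 (adj2 k1) Xp = M2 0 be 0 0" "conj2 (adj2 k1) Xm = M2 0 0 ga 0"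
        by blast
      then show ?thesis unfolding Hin Mt[OF nil(1)] Mt[OF nil(2)] using C2 by simp
    next
      case False
      then obtain be ga where "be > 0" "ga > 0" "conj2 (adj2 k1) Xm = M2 0 be 0 0" "conj2 (adj2 k1) Xp = M2 0 0 ga 0"
        using TT by blast
      then show ?thesis unfolding Hin Mt[OF nil(1)] Mt[OF nil(2)] using exactly_one3_swap[OF C2] by simp
    qed
  qed
  show ?thesis using P1 P2 by blast
qed


end
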